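(* Let $X$ be a complex vector space with $\dim_{\mathbb{C}}X\ge2$ and $Y\ne\{0\}$ a sequentially complete Hausdorff complex locally convex space. Let $\Omega_0,\Omega\subset X$ be $1$-open sets and $C\subset\Omega_0\cap\Omega$. Assume that for every $f\in\mathcal{H}_G(\Omega_0,Y)$ there is a unique $\bar f\in\mathcal{H}_G(\Omega,Y)$ with $\bar f|_C=f|_C$. Then: (a) For every $h\in\mathcal{H}_G(\Omega_0)$ there is a unique $\bar h\in\mathcal{H}_G(\Omega)$ with $\bar h|_C=h|_C$; moreover $\overline{h f}=\bar h\bar f$ for all $h\in\mathcal{H}_G(\Omega_0)$, $f\in\mathcal{H}_G(\Omega_0,Y)$; $\bar h(\Omega)\subset h(\Omega_0)$ for every $h\in\mathcal{H}_G(\Omega_0)$; and $\bar f(\Omega)\subset\overline{\mathrm{co}}(f(\Omega_0))$ for every $f\in\mathcal{H}_G(\Omega_0,Y)$. (b) If $Y$ is a unital complex Banach algebra (not necessarily commutative), then $H:\mathcal{H}_G(\Omega_0,Y)\to\mathcal{H}_G(\Omega,Y)$, $H(f)=\bar f$, is a unital $\mathbb{C}$-algebra morphism, and for every $f\in\mathcal{H}_G(\Omega_0,Y)$ with $f(\Omega_0)\subset U(Y)$ one has $\bar f(\Omega)\subset U(Y)$, where $U(Y)$ is the set of invertible elements of $Y$.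
   Context: $A\subset X$ is $1$-open if $A\cap L$ is open in $L$ for every complex affine line $L\subset X$. $\mathcal{H}_G(\Omega,Y)$ (Gâteaux holomorphic maps): $f:\Omega\to Y$ such that for all $a\in\Omega$, $v\in X$, $\varphi\in Y^*$, $\lambda\mapsto\varphi(f(a+\lambda v))$ is holomorphic on some disc around $0$; $\mathcal{H}_G(\Omega)=\mathcal{H}_G(\Omega,\mathbb{C})$. $\overline{\mathrm{co}}$ denotes the closed convex hull. *)

theory Defs
  imports "HOL-Analysis.Analysis"
begin

text \<open>The library has no class of complex vector spaces; we define one (as in the usual
development, a complex vector space is in particular a real vector space, with the
real scalar multiplication being the restriction of the complex one).\<close>

class complex_vector = real_vector +
  fixes scaleC :: "complex \<Rightarrow> 'a \<Rightarrow> 'a"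
  assumes scaleC_add_right: "scaleC a (x + y) = scaleC a x + scaleC a y"
    and scaleC_add_left: "scaleC (a + b) x = scaleC a x + scaleC b x"
    and scaleC_scaleC: "scaleC a (scaleC b x) = scaleC (a * b) x"
    and scaleC_one: "scaleC 1 x = x"
    and scaleR_scaleC: "scaleR r x = scaleC (of_real r) x"

class complex_banach_algebra_1 = complex_vector + real_normed_algebra_1 + banach +
  assumes norm_scaleC: "norm (scaleC a x) = cmod a * norm x"
    and scaleC_mult_left: "scaleC a (x * y) = scaleC a x * y"
    and scaleC_mult_right: "scaleC a (x * y) = x * scaleC a y"

definition seminorm :: "('b::complex_vector \<Rightarrow> real) \<Rightarrow> bool" where
  "seminorm p \<longleftrightarrow> (\<forall>x y. p (x + y) \<le> p x + p y) \<and> (\<forall>c x. p (scaleC c x) = cmod c * p x)"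

definition lc_topology :: "('b::complex_vector \<Rightarrow> real) set \<Rightarrow> 'b topology" where
  "lc_topology P = topology (\<lambda>U. \<forall>y\<in>U. \<exists>F. finite F \<and> F \<subseteq> P \<and>
       (\<exists>e>0. {z. \<forall>p\<in>F. p (z - y) < e} \<subseteq> U))"

definition seq_complete_lcs :: "('b::complex_vector \<Rightarrow> real) set \<Rightarrow> bool" where
  "seq_complete_lcs P \<longleftrightarrow>
     (\<forall>s::nat \<Rightarrow> 'b. (\<forall>p\<in>P. \<forall>e>0. \<exists>N. \<forall>m\<ge>N. \<forall>n\<ge>N. p (s m - s n) < e)
        \<longrightarrow> (\<exists>y. limitin (lc_topology P) s y sequentially))"

definition sc_hausdorff_lcs :: "('b::complex_vector \<Rightarrow> real) set \<Rightarrow> bool" where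
  "sc_hausdorff_lcs P \<longleftrightarrow> (\<forall>p\<in>P. seminorm p) \<and> Hausdorff_space (lc_topology P)
     \<and> seq_complete_lcs P"

definition lc_dual :: "('b::complex_vector \<Rightarrow> real) set \<Rightarrow> ('b \<Rightarrow> complex) set" where
  "lc_dual P = {\<phi>. (\<forall>x y. \<phi> (x + y) = \<phi> x + \<phi> y) \<and> (\<forall>c x. \<phi> (scaleC c x) = c * \<phi> x)
                  \<and> continuous_map (lc_topology P) euclidean \<phi>}"

definition closed_convex_hull :: "('b::complex_vector \<Rightarrow> real) set \<Rightarrow> 'b set \<Rightarrow> 'b set" where
  "closed_convex_hull P S = (lc_topology P) closure_of (convex hull S)"

text \<open>A is 1-open iff its trace on every complex affine line
 L = {a + l v | l} (v \<noteq> 0) is open in L; L carries the topology transported from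
 the complex plane by the parametrisation l \<mapsto> a + l v.\<close>

definition one_open :: "'a::complex_vector set \<Rightarrow> bool" where
  "one_open A \<longleftrightarrow> (\<forall>a v. v \<noteq> 0 \<longrightarrow> open {l::complex. a + scaleC l v \<in> A})"

definition HG :: "('b::complex_vector \<Rightarrow> real) set \<Rightarrow> 'a::complex_vector set \<Rightarrow> ('a \<Rightarrow> 'b) set" where
  "HG P \<Omega> = {f. \<forall>a\<in>\<Omega>. \<forall>v. \<forall>\<phi>\<in>lc_dual P. \<exists>r>0. (\<forall>l\<in>ball 0 r. a + scaleC l v \<in> \<Omega>) \<and>
                 (\<lambda>l. \<phi> (f (a + scaleC l v))) holomorphic_on ball 0 r}"

text \<open>Scalar-valued case Y = C (the dual of C consists of the maps z \<mapsto> c z).\<close>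

definition HG_scalar :: "'a::complex_vector set \<Rightarrow> ('a \<Rightarrow> complex) set" where
  "HG_scalar \<Omega> = {h. \<forall>a\<in>\<Omega>. \<forall>v. \<exists>r>0. (\<forall>l\<in>ball 0 r. a + scaleC l v \<in> \<Omega>) \<and>
                 (\<lambda>l. h (a + scaleC l v)) holomorphic_on ball 0 r}"

definition is_ext :: "('b::complex_vector \<Rightarrow> real) set \<Rightarrow> 'a::complex_vector set \<Rightarrow> 'a set
    \<Rightarrow> ('a \<Rightarrow> 'b) \<Rightarrow> ('a \<Rightarrow> 'b) \<Rightarrow> bool" where
  "is_ext P \<Omega> C f F \<longleftrightarrow> F \<in> HG P \<Omega> \<and> (\<forall>x\<in>C. F x = f x)"

definition is_ext_scalar :: "'a::complex_vector set \<Rightarrow> 'a set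
    \<Rightarrow> ('a \<Rightarrow> complex) \<Rightarrow> ('a \<Rightarrow> complex) \<Rightarrow> bool" where
  "is_ext_scalar \<Omega> C h H \<longleftrightarrow> H \<in> HG_scalar \<Omega> \<and> (\<forall>x\<in>C. H x = h x)"

definition unique_ext_property :: "('b::complex_vector \<Rightarrow> real) set \<Rightarrow> 'a::complex_vector set
    \<Rightarrow> 'a set \<Rightarrow> 'a set \<Rightarrow> bool" where
  "unique_ext_property P \<Omega>0 \<Omega> C \<longleftrightarrow>
     (\<forall>f\<in>HG P \<Omega>0. \<exists>F. is_ext P \<Omega> C f F \<and> (\<forall>F'. is_ext P \<Omega> C f F' \<longrightarrow> (\<forall>x\<in>\<Omega>. F' x = F x)))"

definition invertibles :: "'c::ring_1 set" where
  "invertibles = {y. \<exists>z. y * z = 1 \<and> z * y = 1}"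

end

theory Submission
  imports Defs "HOL-Complex_Analysis.Complex_Analysis"
begin


definition sublin :: "('b::real_vector \<Rightarrow> real) \<Rightarrow> bool" where
  "sublin s \<longleftrightarrow> (\<forall>x y. s (x + y) \<le> s x + s y) \<and> (\<forall>t x. t \<ge> 0 \<longrightarrow> s (t *\<^sub>R x) = t * s x)"

lemma sublin_0: "sublin s \<Longrightarrow> s 0 = 0"
  unfolding sublin_def by (metis mult_zero_left order_refl scaleR_zero_left)

lemma sublin_lower: "sublin s \<Longrightarrow> - s (- x) \<le> s x"
proof -
  assume s: "sublin s"
  have "s (x + - x) \<le> s x + s (- x)" using s unfolding sublin_def by blast
  then show ?thesis using sublin_0[OF s] by simp
qed

lemma HB_dom:
  fixes \<rho> :: "'b::real_vector \<Rightarrow> real"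
  assumes rho: "sublin \<rho>"
  shows "\<exists>\<psi>. linear \<psi> \<and> (\<forall>x. \<psi> x \<le> \<rho> x)"
proof -
  define sepi where "sepi \<sigma> = {(x,t). \<sigma> x < (t::real)}" for \<sigma> :: "'b \<Rightarrow> real"
  define A where "A = {sepi \<sigma> | \<sigma>. sublin \<sigma> \<and> (\<forall>x. \<sigma> x \<le> \<rho> x)}"
  have sepi_sub: "sepi \<sigma>1 \<subseteq> sepi \<sigma>2 \<longleftrightarrow> (\<forall>x. \<sigma>2 x \<le> \<sigma>1 x)" for \<sigma>1 \<sigma>2
  proof
    assume h: "sepi \<sigma>1 \<subseteq> sepi \<sigma>2"
    show "\<forall>x. \<sigma>2 x \<le> \<sigma>1 x"
    proof (rule ccontr)
      assume "\<not> (\<forall>x. \<sigma>2 x \<le> \<sigma>1 x)"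
      then obtain x where x: "\<sigma>1 x < \<sigma>2 x" by (auto simp: not_le)
      have "(x, (\<sigma>1 x + \<sigma>2 x)/2) \<in> sepi \<sigma>1" using x by (simp add: sepi_def)
      with h have "(x, (\<sigma>1 x + \<sigma>2 x)/2) \<in> sepi \<sigma>2" by blast
      then show False using x by (simp add: sepi_def)
    qed
  next
    assume "\<forall>x. \<sigma>2 x \<le> \<sigma>1 x"
    then show "sepi \<sigma>1 \<subseteq> sepi \<sigma>2" unfolding sepi_def by (auto intro: le_less_trans)
  qed
  have "\<forall>C\<in>chains A. \<exists>U\<in>A. \<forall>X\<in>C. X \<subseteq> U"
  proof
    fix C assume C: "C \<in> chains A"
    show "\<exists>U\<in>A. \<forall>X\<in>C. X \<subseteq> U"
    proof (cases "C = {}")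
      case True
      then show ?thesis using rho unfolding A_def by blast
    next
      case False
      define \<Sigma> where "\<Sigma> = {\<sigma>. sublin \<sigma> \<and> (\<forall>x. \<sigma> x \<le> \<rho> x) \<and> sepi \<sigma> \<in> C}"
      have CA: "C \<subseteq> A" and Cch: "\<And>X Y. X \<in> C \<Longrightarrow> Y \<in> C \<Longrightarrow> X \<subseteq> Y \<or> Y \<subseteq> X"
        using C unfolding chains_def chain_subset_def by auto
      have CS: "\<And>X. X \<in> C \<Longrightarrow> \<exists>\<sigma>\<in>\<Sigma>. X = sepi \<sigma>"
        using CA unfolding A_def \<Sigma>_def by blast
      obtain \<sigma>0 where s0: "\<sigma>0 \<in> \<Sigma>" using False CS by blast
      have comp: "(\<forall>x. \<sigma>1 x \<le> \<sigma>2 x) \<or> (\<forall>x. \<sigma>2 x \<le> \<sigma>1 x)" if "\<sigma>1 \<in> \<Sigma>" "\<sigma>2 \<in> \<Sigma>" for \<sigma>1 \<sigma>2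
        using Cch[of "sepi \<sigma>1" "sepi \<sigma>2"] that sepi_sub unfolding \<Sigma>_def by blast
      define \<tau> where "\<tau> x = Inf ((\<lambda>\<sigma>. \<sigma> x) ` \<Sigma>)" for x
      have bdd: "bdd_below ((\<lambda>\<sigma>. \<sigma> x) ` \<Sigma>)" for x
      proof (rule bdd_belowI[of _ "- \<rho> (- x)"])
        fix y assume "y \<in> (\<lambda>\<sigma>. \<sigma> x) ` \<Sigma>"
        then obtain \<sigma> where "\<sigma> \<in> \<Sigma>" "y = \<sigma> x" by blast
        then have "sublin \<sigma>" "\<sigma> (-x) \<le> \<rho> (-x)" "y = \<sigma> x" unfolding \<Sigma>_def by auto
        then show "- \<rho> (- x) \<le> y" using sublin_lower[of \<sigma> x] by linarith
      qed
      have ne: "(\<lambda>\<sigma>. \<sigma> x) ` \<Sigma> \<noteq> {}" for x using s0 by blast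
      have tle: "\<tau> x \<le> \<sigma> x" if "\<sigma> \<in> \<Sigma>" for \<sigma> x
        unfolding \<tau>_def using that bdd by (simp add: cInf_lower)
      have tge: "c \<le> \<tau> x" if "\<And>\<sigma>. \<sigma> \<in> \<Sigma> \<Longrightarrow> c \<le> \<sigma> x" for c x
        unfolding \<tau>_def using ne that by (intro cInf_greatest) auto
      have sub_add: "\<tau> (x + y) \<le> \<tau> x + \<tau> y" for x y
      proof -
        have "\<tau> (x + y) \<le> \<sigma>1 x + \<sigma>2 y" if "\<sigma>1 \<in> \<Sigma>" "\<sigma>2 \<in> \<Sigma>" for \<sigma>1 \<sigma>2
        proof -
          have sl: "sublin \<sigma>1" "sublin \<sigma>2" using that unfolding \<Sigma>_def by auto
          from comp[OF that] show ?thesis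
          proof
            assume le: "\<forall>x. \<sigma>1 x \<le> \<sigma>2 x"
            have "\<tau> (x+y) \<le> \<sigma>1 (x+y)" using tle that by blast
            also have "\<dots> \<le> \<sigma>1 x + \<sigma>1 y" using sl unfolding sublin_def by blast
            finally show ?thesis using le[rule_format, of y] by linarith
          next
            assume le: "\<forall>x. \<sigma>2 x \<le> \<sigma>1 x"
            have "\<tau> (x+y) \<le> \<sigma>2 (x+y)" using tle that by blast
            also have "\<dots> \<le> \<sigma>2 x + \<sigma>2 y" using sl unfolding sublin_def by blast
            finally show ?thesis using le[rule_format, of x] by linarith
          qed
        qed
        then have "\<tau> (x + y) - \<sigma>2 y \<le> \<tau> x" if "\<sigma>2 \<in> \<Sigma>" for \<sigma>2
          using that by (intro tge) (smt (verit))
        then have "\<tau> (x + y) - \<tau> x \<le> \<tau> y" by (intro tge) (smt (verit))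
        then show ?thesis by simp
      qed
      have hom: "\<tau> (t *\<^sub>R x) = t * \<tau> x" if t: "t \<ge> 0" for t x
      proof (cases "t = 0")
        case True
        have "\<tau> 0 = 0"
        proof (rule antisym)
          show "\<tau> 0 \<le> 0" using tle[OF s0, of 0] sublin_0[of \<sigma>0] s0 unfolding \<Sigma>_def by simp
          show "0 \<le> \<tau> 0" by (rule tge) (simp add: \<Sigma>_def sublin_0)
        qed
        then show ?thesis using True by simp
      next
        case False
        then have tp: "t > 0" using t by simp
        have h1: "\<sigma> (t *\<^sub>R x) = t * \<sigma> x" if "\<sigma> \<in> \<Sigma>" for \<sigma>
          using that t unfolding \<Sigma>_def sublin_def by blast
        have "\<tau> (t *\<^sub>R x) / t \<le> \<tau> x"
          by (rule tge) (use h1 tle tp in \<open>simp add: divide_le_eq mult.commute\<close>)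
        moreover have "t * \<tau> x \<le> \<tau> (t *\<^sub>R x)"
        proof (rule tge)
          fix \<sigma> assume s: "\<sigma> \<in> \<Sigma>"
          show "t * \<tau> x \<le> \<sigma> (t *\<^sub>R x)" unfolding h1[OF s] using tle[OF s, of x] tp by (simp add: mult_left_mono)
        qed
        ultimately show ?thesis using tp by (simp add: divide_le_eq mult.commute)
      qed
      have sl: "sublin \<tau>" unfolding sublin_def using sub_add hom by blast
      have tr: "\<forall>x. \<tau> x \<le> \<rho> x" using tle[OF s0] s0 unfolding \<Sigma>_def by (smt (verit) mem_Collect_eq)
      have "sepi \<tau> \<in> A" unfolding A_def using sl tr by blast
      moreover have "\<forall>X\<in>C. X \<subseteq> sepi \<tau>"
      proof
        fix X assume "X \<in> C"
        then obtain \<sigma> where "\<sigma> \<in> \<Sigma>" "X = sepi \<sigma>" using CS by blast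
        then show "X \<subseteq> sepi \<tau>" using sepi_sub tle by blast
      qed
      ultimately show ?thesis by blast
    qed
  qed
  from Zorn_Lemma2[OF this] obtain M where MA: "M \<in> A" and Mmax: "\<forall>X\<in>A. M \<subseteq> X \<longrightarrow> X = M" by blast
  then obtain \<sigma> where sig: "sublin \<sigma>" "\<forall>x. \<sigma> x \<le> \<rho> x" and M: "M = sepi \<sigma>" unfolding A_def by blast
  have minimal: "\<sigma>' x = \<sigma> x" if "sublin \<sigma>'" "\<forall>x. \<sigma>' x \<le> \<sigma> x" for \<sigma>' x
  proof -
    have "sepi \<sigma>' \<in> A" unfolding A_def using that sig by (smt (verit) mem_Collect_eq)
    moreover have "M \<subseteq> sepi \<sigma>'" using M sepi_sub that by blast
    ultimately have "sepi \<sigma>' = M" using Mmax by blast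
    then have "\<forall>x. \<sigma> x \<le> \<sigma>' x" using M sepi_sub by blast
    then show ?thesis using that by (meson order_antisym)
  qed
  have superadd: "\<sigma> x + \<sigma> y \<le> \<sigma> (x + y)" for x y
  proof -
    define \<sigma>' where "\<sigma>' z = Inf ((\<lambda>t. \<sigma> (z + t *\<^sub>R y) - t * \<sigma> y) ` {0..})" for z
    have bdd: "bdd_below ((\<lambda>t. \<sigma> (z + t *\<^sub>R y) - t * \<sigma> y) ` {0..})" for z
    proof (rule bdd_belowI[of _ "- \<sigma> (- z)"])
      fix w assume "w \<in> (\<lambda>t. \<sigma> (z + t *\<^sub>R y) - t * \<sigma> y) ` {0..}"
      then obtain t where t: "t \<ge> 0" "w = \<sigma> (z + t *\<^sub>R y) - t * \<sigma> y" by auto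
      have "\<sigma> ((z + t *\<^sub>R y) + - z) \<le> \<sigma> (z + t *\<^sub>R y) + \<sigma> (- z)" using sig unfolding sublin_def by blast
      moreover have "\<sigma> (t *\<^sub>R y) = t * \<sigma> y" using sig t unfolding sublin_def by blast
      ultimately show "- \<sigma> (- z) \<le> w" using t by simp
    qed
    have le1: "\<sigma>' z \<le> \<sigma> (z + t *\<^sub>R y) - t * \<sigma> y" if "t \<ge> 0" for z t
      unfolding \<sigma>'_def using bdd that by (intro cInf_lower) auto
    have ge1: "c \<le> \<sigma>' z" if "\<And>t. t \<ge> 0 \<Longrightarrow> c \<le> \<sigma> (z + t *\<^sub>R y) - t * \<sigma> y" for c z
      unfolding \<sigma>'_def using that by (intro cInf_greatest) auto
    have sadd: "\<sigma>' (z1 + z2) \<le> \<sigma>' z1 + \<sigma>' z2" for z1 z2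
    proof -
      have "\<sigma>' (z1 + z2) \<le> (\<sigma> (z1 + t1 *\<^sub>R y) - t1 * \<sigma> y) + (\<sigma> (z2 + t2 *\<^sub>R y) - t2 * \<sigma> y)"
        if "t1 \<ge> 0" "t2 \<ge> 0" for t1 t2
      proof -
        have "\<sigma>' (z1 + z2) \<le> \<sigma> (z1 + z2 + (t1 + t2) *\<^sub>R y) - (t1 + t2) * \<sigma> y"
          using le1 that by simp
        also have "z1 + z2 + (t1 + t2) *\<^sub>R y = (z1 + t1 *\<^sub>R y) + (z2 + t2 *\<^sub>R y)"
          by (simp add: algebra_simps)
        also have "\<sigma> \<dots> \<le> \<sigma> (z1 + t1 *\<^sub>R y) + \<sigma> (z2 + t2 *\<^sub>R y)" using sig unfolding sublin_def by blast
        finally show ?thesis by (simp add: algebra_simps)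
      qed
      then have "\<sigma>' (z1 + z2) - (\<sigma> (z2 + t2 *\<^sub>R y) - t2 * \<sigma> y) \<le> \<sigma>' z1" if "t2 \<ge> 0" for t2
        using that by (intro ge1) (smt (verit))
      then have "\<sigma>' (z1 + z2) - \<sigma>' z1 \<le> \<sigma>' z2" by (intro ge1) (smt (verit))
      then show ?thesis by simp
    qed
    have shom: "\<sigma>' (c *\<^sub>R z) = c * \<sigma>' z" if c: "c \<ge> 0" for c z
    proof (cases "c = 0")
      case True
      have "\<sigma>' 0 = 0"
      proof (rule antisym)
        show "\<sigma>' 0 \<le> 0" using le1[of 0 0] sublin_0[OF sig(1)] by simp
        show "0 \<le> \<sigma>' 0"
          by (rule ge1) (use sig in \<open>simp add: sublin_def\<close>)
      qed
      then show ?thesis using True by simp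
    next
      case False
      then have cp: "c > 0" using c by simp
      have hh: "\<sigma> (c *\<^sub>R w) = c * \<sigma> w" for w using sig cp unfolding sublin_def by simp
      have "\<sigma>' (c *\<^sub>R z) / c \<le> \<sigma>' z"
      proof (rule ge1)
        fix t :: real assume t: "t \<ge> 0"
        have "\<sigma>' (c *\<^sub>R z) \<le> \<sigma> (c *\<^sub>R z + (c*t) *\<^sub>R y) - (c*t) * \<sigma> y" using le1 t cp by simp
        moreover have "c *\<^sub>R z + (c*t) *\<^sub>R y = c *\<^sub>R (z + t *\<^sub>R y)" by (simp add: scaleR_add_right)
        ultimately have "\<sigma>' (c *\<^sub>R z) \<le> c * \<sigma> (z + t *\<^sub>R y) - (c * t) * \<sigma> y"
          using hh[of "z + t *\<^sub>R y"] by simp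
        then have "\<sigma>' (c *\<^sub>R z) \<le> c * (\<sigma> (z + t *\<^sub>R y) - t * \<sigma> y)"
          by (simp add: right_diff_distrib mult.assoc)
        then show "\<sigma>' (c *\<^sub>R z) / c \<le> \<sigma> (z + t *\<^sub>R y) - t * \<sigma> y"
          using cp by (simp add: divide_le_eq mult.commute)
      qed
      moreover have "c * \<sigma>' z \<le> \<sigma>' (c *\<^sub>R z)"
      proof (rule ge1)
        fix t :: real assume t: "t \<ge> 0"
        have "\<sigma>' z \<le> \<sigma> (z + (t/c) *\<^sub>R y) - (t/c) * \<sigma> y" using le1[of "t/c" z] t cp by simp
        then have "c * \<sigma>' z \<le> c * (\<sigma> (z + (t/c) *\<^sub>R y) - (t/c) * \<sigma> y)" using cp by simp
        also have "\<dots> = c * \<sigma> (z + (t/c) *\<^sub>R y) - t * \<sigma> y" using cp by (simp add: right_diff_distrib)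
        also have "\<dots> = \<sigma> (c *\<^sub>R (z + (t/c) *\<^sub>R y)) - t * \<sigma> y" using hh[of "z + (t/c) *\<^sub>R y"] by simp
        also have "c *\<^sub>R (z + (t/c) *\<^sub>R y) = c *\<^sub>R z + t *\<^sub>R y" using cp by (simp add: scaleR_add_right)
        finally show "c * \<sigma>' z \<le> \<sigma> (c *\<^sub>R z + t *\<^sub>R y) - t * \<sigma> y" .
      qed
      ultimately show ?thesis using cp by (simp add: divide_le_eq mult.commute)
    qed
    have "sublin \<sigma>'" unfolding sublin_def using sadd shom by blast
    moreover have "\<forall>z. \<sigma>' z \<le> \<sigma> z" using le1[of 0] by simp
    ultimately have "\<sigma>' x = \<sigma> x" using minimal by blast
    then have "\<sigma> x \<le> \<sigma> (x + 1 *\<^sub>R y) - 1 * \<sigma> y" using le1[of 1 x] by simp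
    then show ?thesis by simp
  qed
  have add: "\<sigma> (x + y) = \<sigma> x + \<sigma> y" for x y
    using superadd[of x y] sig(1) unfolding sublin_def by (meson order_antisym)
  have neg: "\<sigma> (- x) = - \<sigma> x" for x
    using add[of x "-x"] sublin_0[OF sig(1)] by simp
  have scal: "\<sigma> (c *\<^sub>R x) = c * \<sigma> x" for c x
  proof (cases "c \<ge> 0")
    case True then show ?thesis using sig(1) unfolding sublin_def by blast
  next
    case False
    then have "\<sigma> ((-c) *\<^sub>R x) = (-c) * \<sigma> x" using sig(1) unfolding sublin_def
      by (metis linorder_not_le neg_0_le_iff_le order_less_imp_le)
    then show ?thesis using neg[of "(-c) *\<^sub>R x"] by simp
  qed
  have "linear \<sigma>" by (rule linearI) (use add scal in auto)
  then show ?thesis using sig by blast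
qed



lemma Inf_img_le: "bdd_below (f ` S) \<Longrightarrow> x \<in> S \<Longrightarrow> Inf (f ` S) \<le> (f x :: real)"
  by (rule cInf_lower) auto

lemma le_Inf_img: "S \<noteq> {} \<Longrightarrow> (\<And>x. x \<in> S \<Longrightarrow> c \<le> f x) \<Longrightarrow> c \<le> Inf (f ` S :: real set)"
  by (rule cInf_greatest) auto

lemma SEP_real:
  fixes q :: "'b::real_vector \<Rightarrow> real"
  assumes q: "sublin q" and K: "convex K" "K \<noteq> {}" and qK: "\<And>k. k \<in> K \<Longrightarrow> q k \<ge> 1"
  shows "\<exists>\<psi>. linear \<psi> \<and> (\<forall>x. \<psi> x \<le> q x) \<and> (\<forall>k\<in>K. \<psi> k \<ge> 1)"
proof -
  have qadd: "q (x + y) \<le> q x + q y" for x y using q unfolding sublin_def by blast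
  have qhom: "t \<ge> 0 \<Longrightarrow> q (t *\<^sub>R x) = t * q x" for t x using q unfolding sublin_def by blast
  define S where "S = {0::real..} \<times> K"
  define g where "g z = (\<lambda>(l,k). q (z + l *\<^sub>R k) - l)" for z
  define \<rho> where "\<rho> z = Inf (g z ` S)" for z
  have Sne: "S \<noteq> {}" using K unfolding S_def by auto
  have glow: "- q (- z) \<le> g z p" if pS: "p \<in> S" for z p
  proof -
    obtain l k where p: "p = (l,k)" "l \<ge> 0" "k \<in> K" using pS unfolding S_def by (cases p) auto
    have "q (l *\<^sub>R k) \<le> q (z + l *\<^sub>R k) + q (- z)" using qadd[of "z + l *\<^sub>R k" "- z"] by simp
    moreover have "q (l *\<^sub>R k) \<ge> l" using qhom[of l k] qK[OF p(3)] p(2)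
      by (simp add: mult_le_cancel_left1)
    ultimately show ?thesis unfolding g_def p by simp
  qed
  have bdd: "bdd_below (g z ` S)" for z using glow by (intro bdd_belowI[of _ "- q (- z)"]) auto
  have le1: "\<rho> z \<le> q (z + l *\<^sub>R k) - l" if "l \<ge> 0" "k \<in> K" for z l k
    using Inf_img_le[OF bdd, of "(l,k)" z] that unfolding \<rho>_def S_def g_def by simp
  have ge1: "c \<le> \<rho> z" if "\<And>l k. l \<ge> 0 \<Longrightarrow> k \<in> K \<Longrightarrow> c \<le> q (z + l *\<^sub>R k) - l" for c z
    unfolding \<rho>_def using Sne by (rule le_Inf_img) (use that in \<open>auto simp: S_def g_def\<close>)
  obtain k0 where k0: "k0 \<in> K" using K by auto
  have sadd: "\<rho> (z1 + z2) \<le> \<rho> z1 + \<rho> z2" for z1 z2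
  proof -
    have main: "\<rho> (z1 + z2) \<le> (q (z1 + l1 *\<^sub>R k1) - l1) + (q (z2 + l2 *\<^sub>R k2) - l2)"
      if "l1 \<ge> 0" "k1 \<in> K" "l2 \<ge> 0" "k2 \<in> K" for l1 k1 l2 k2
    proof (cases "l1 + l2 = 0")
      case True
      then have "l1 = 0" "l2 = 0" using that by auto
      then show ?thesis using le1[of 0 k1 "z1 + z2"] that qadd[of z1 z2] by simp
    next
      case False
      then have lp: "l1 + l2 > 0" using that by auto
      define k where "k = (l1 / (l1 + l2)) *\<^sub>R k1 + (l2 / (l1 + l2)) *\<^sub>R k2"
      have kK: "k \<in> K" unfolding k_def using K(1) that lp
        by (intro convexD) (auto simp: add_divide_distrib[symmetric])
      have "(l1 + l2) *\<^sub>R k = l1 *\<^sub>R k1 + l2 *\<^sub>R k2"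
        unfolding k_def using lp by (simp add: scaleR_add_right)
      then have eq: "z1 + z2 + (l1 + l2) *\<^sub>R k = (z1 + l1 *\<^sub>R k1) + (z2 + l2 *\<^sub>R k2)"
        by (simp add: algebra_simps)
      have "\<rho> (z1 + z2) \<le> q (z1 + z2 + (l1 + l2) *\<^sub>R k) - (l1 + l2)" using le1 kK lp by simp
      also have "\<dots> \<le> (q (z1 + l1 *\<^sub>R k1) - l1) + (q (z2 + l2 *\<^sub>R k2) - l2)"
        unfolding eq using qadd[of "z1 + l1 *\<^sub>R k1" "z2 + l2 *\<^sub>R k2"] by simp
      finally show ?thesis .
    qed
    have "\<rho> (z1 + z2) - (q (z2 + l2 *\<^sub>R k2) - l2) \<le> \<rho> z1" if "l2 \<ge> 0" "k2 \<in> K" for l2 k2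
      by (rule ge1) (use main that in \<open>smt (verit)\<close>)
    then have "\<rho> (z1 + z2) - \<rho> z1 \<le> \<rho> z2" by (intro ge1) (smt (verit))
    then show ?thesis by simp
  qed
  have shom: "\<rho> (c *\<^sub>R z) = c * \<rho> z" if c: "c \<ge> 0" for c z
  proof (cases "c = 0")
    case True
    have "\<rho> 0 = 0"
    proof (rule antisym)
      show "\<rho> 0 \<le> 0" using le1[of 0 k0 0] k0 by (simp add: sublin_0[OF q])
      show "0 \<le> \<rho> 0"
      proof (rule ge1)
        fix l k assume "l \<ge> (0::real)" "k \<in> K"
        then show "0 \<le> q (0 + l *\<^sub>R k) - l" using qhom[of l k] qK[of k]
          by (simp add: mult_le_cancel_left1)
      qed
    qed
    then show ?thesis using True by simp
  next
    case False
    then have cp: "c > 0" using c by simp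
    have "\<rho> (c *\<^sub>R z) / c \<le> \<rho> z"
    proof (rule ge1)
      fix l k assume lk: "l \<ge> (0::real)" "k \<in> K"
      have "\<rho> (c *\<^sub>R z) \<le> q (c *\<^sub>R z + (c * l) *\<^sub>R k) - c * l" using le1[of "c*l" k] lk cp by simp
      moreover have "c *\<^sub>R z + (c * l) *\<^sub>R k = c *\<^sub>R (z + l *\<^sub>R k)" by (simp add: scaleR_add_right)
      ultimately have "\<rho> (c *\<^sub>R z) \<le> c * q (z + l *\<^sub>R k) - c * l" using qhom cp by simp
      then show "\<rho> (c *\<^sub>R z) / c \<le> q (z + l *\<^sub>R k) - l" using cp
        by (simp add: divide_le_eq right_diff_distrib mult.commute)
    qed
    moreover have "c * \<rho> z \<le> \<rho> (c *\<^sub>R z)"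
    proof (rule ge1)
      fix l k assume lk: "l \<ge> (0::real)" "k \<in> K"
      have "\<rho> z \<le> q (z + (l/c) *\<^sub>R k) - l/c" using le1[of "l/c" k z] lk cp by simp
      then have "c * \<rho> z \<le> c * (q (z + (l/c) *\<^sub>R k) - l/c)" using cp
        by (simp add: mult_left_mono)
      also have "\<dots> = c * q (z + (l/c) *\<^sub>R k) - l" using cp by (simp add: right_diff_distrib)
      finally have "c * \<rho> z \<le> c * q (z + (l/c) *\<^sub>R k) - l" .
      also have "c * q (z + (l/c) *\<^sub>R k) = q (c *\<^sub>R (z + (l/c) *\<^sub>R k))" using qhom cp by simp
      also have "c *\<^sub>R (z + (l/c) *\<^sub>R k) = c *\<^sub>R z + l *\<^sub>R k" using cp by (simp add: scaleR_add_right)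
      finally show "c * \<rho> z \<le> q (c *\<^sub>R z + l *\<^sub>R k) - l" .
    qed
    ultimately show ?thesis using cp by (simp add: divide_le_eq mult.commute)
  qed
  have "sublin \<rho>" unfolding sublin_def using sadd shom by blast
  from HB_dom[OF this] obtain \<psi> where \<psi>: "linear \<psi>" "\<forall>x. \<psi> x \<le> \<rho> x" by blast
  have "\<psi> x \<le> q x" for x using \<psi>(2) le1[of 0 k0 x] k0 by (smt (verit) add.right_neutral scaleR_zero_left)
  moreover have "\<psi> k \<ge> 1" if "k \<in> K" for k
  proof -
    have "\<psi> (- k) \<le> q (- k + 1 *\<^sub>R k) - 1" using \<psi>(2) le1[of 1 k "- k"] that by (smt (verit))
    then have "\<psi> (- k) \<le> -1" using sublin_0[OF q] by simp
    moreover have "\<psi> (- k) = - \<psi> k" using \<psi>(1) by (simp add: linear_neg)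
    ultimately show ?thesis by simp
  qed
  ultimately show ?thesis using \<psi>(1) by blast
qed



lemma scaleC_zero_left [simp]: "scaleC 0 (x::'a::complex_vector) = 0"
  by (metis scaleR_scaleC scaleR_zero_left of_real_0)

lemma scaleC_zero_right [simp]: "scaleC c (0::'a::complex_vector) = 0"
  by (metis scaleC_add_right add_cancel_right_right add.right_neutral)

lemma scaleC_minus_right: "scaleC c (- x) = - scaleC c (x::'a::complex_vector)"
  by (metis scaleC_add_right scaleC_zero_right add.right_inverse eq_neg_iff_add_eq_0)

lemma scaleC_diff_right: "scaleC c (x - y) = scaleC c x - scaleC c (y::'a::complex_vector)"
  by (metis diff_conv_add_uminus scaleC_add_right scaleC_minus_right)

lemma scaleC_minus_left: "scaleC (- c) x = - scaleC c (x::'a::complex_vector)"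
  by (metis scaleC_add_left scaleC_zero_left add.right_inverse eq_neg_iff_add_eq_0)

lemma scaleC_diff_left: "scaleC (c - d) x = scaleC c x - scaleC d (x::'a::complex_vector)"
  by (metis diff_conv_add_uminus scaleC_add_left scaleC_minus_left)

lemma scaleC_decomp: "scaleC c (z::'a::complex_vector) = Re c *\<^sub>R z + Im c *\<^sub>R scaleC \<i> z"
proof -
  have "c = of_real (Re c) + of_real (Im c) * \<i>" by (simp add: complex_eq_iff)
  then have "scaleC c z = scaleC (of_real (Re c)) z + scaleC (of_real (Im c) * \<i>) z"
    by (metis scaleC_add_left)
  then show ?thesis by (simp add: scaleR_scaleC scaleC_scaleC)
qed

definition cplx :: "('b::complex_vector \<Rightarrow> real) \<Rightarrow> 'b \<Rightarrow> complex" where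
  "cplx \<psi> z = complex_of_real (\<psi> z) - \<i> * complex_of_real (\<psi> (scaleC \<i> z))"

lemma cplx_Re [simp]: "Re (cplx \<psi> z) = \<psi> z" by (simp add: cplx_def)
lemma cplx_Im [simp]: "Im (cplx \<psi> z) = - \<psi> (scaleC \<i> z)" by (simp add: cplx_def)

lemma cplx_add: "linear \<psi> \<Longrightarrow> cplx \<psi> (x + y) = cplx \<psi> x + cplx \<psi> y"
  by (simp add: cplx_def linear_add scaleC_add_right)

lemma cplx_scaleC:
  assumes "linear \<psi>" shows "cplx \<psi> (scaleC c z) = c * cplx \<psi> z"
proof -
  have l: "\<psi> (a *\<^sub>R x + b *\<^sub>R y) = a * \<psi> x + b * \<psi> y" for a b x y
    using assms by (simp add: linear_add linear_scale)
  have ii: "scaleC \<i> (scaleC \<i> z) = - z"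
    by (simp add: scaleC_scaleC scaleC_minus_left scaleC_one)
  have iz: "scaleC \<i> (scaleC c z) = Re c *\<^sub>R scaleC \<i> z + Im c *\<^sub>R (- z)"
    by (metis scaleC_decomp scaleC_scaleC mult.commute ii)
  have n: "\<psi> (-z) = - \<psi> z" using assms by (simp add: linear_neg)
  have A: "\<psi> (scaleC c z) = Re c * \<psi> z + Im c * \<psi> (scaleC \<i> z)"
    by (subst scaleC_decomp) (simp add: l)
  have B: "\<psi> (scaleC \<i> (scaleC c z)) = Re c * \<psi> (scaleC \<i> z) - Im c * \<psi> z"
    by (subst iz) (simp add: l n linear_diff[OF assms] linear_scale[OF assms])
  show ?thesis unfolding cplx_def A B by (simp add: complex_eq_iff algebra_simps)
qed

lemma cplx_diff: "linear \<psi> \<Longrightarrow> cplx \<psi> (x - y) = cplx \<psi> x - cplx \<psi> y"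
  by (metis add_diff_cancel cplx_add diff_add_cancel eq_diff_eq)

lemma seminorm_nonneg: assumes "seminorm p" shows "p x \<ge> 0"
proof -
  have p0: "p 0 = 0" using assms unfolding seminorm_def by (metis scaleC_zero_left norm_zero mult_zero_left)
  have "p (x + - x) \<le> p x + p (- x)" using assms unfolding seminorm_def by blast
  moreover have "p (- x) = p x" using assms unfolding seminorm_def
    by (metis scaleC_minus_left scaleC_one norm_minus_cancel norm_one mult_1)
  ultimately show ?thesis using p0 by simp
qed

lemma seminorm_minus: "seminorm p \<Longrightarrow> p (- x) = p x"
  unfolding seminorm_def by (metis scaleC_minus_left scaleC_one norm_minus_cancel norm_one mult_1)

lemma seminorm_scaleR: "seminorm p \<Longrightarrow> p (t *\<^sub>R x) = \<bar>t\<bar> * p x"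
  unfolding seminorm_def by (simp add: scaleR_scaleC)

lemma seminorm_add: "seminorm p \<Longrightarrow> p (x + y) \<le> p x + p y"
  unfolding seminorm_def by blast

lemma seminorm_scaleC: "seminorm p \<Longrightarrow> p (scaleC c x) = cmod c * p x"
  unfolding seminorm_def by blast

lemma seminorm_diff_sym: "seminorm p \<Longrightarrow> p (x - y) = p (y - x)"
  by (metis minus_diff_eq seminorm_minus)

section \<open>The locally convex topology\<close>

lemma lc_istopology:
  fixes P :: "('b::complex_vector \<Rightarrow> real) set"
  shows "istopology (\<lambda>U. \<forall>y\<in>U. \<exists>F. finite F \<and> F \<subseteq> P \<and>
       (\<exists>e>0. {z. \<forall>p\<in>F. p (z - y) < e} \<subseteq> U))"
  unfolding istopology_def
proof (intro conjI allI impI)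
  fix S T :: "'b set"
  assume S: "\<forall>y\<in>S. \<exists>F. finite F \<and> F \<subseteq> P \<and> (\<exists>e>0. {z. \<forall>p\<in>F. p (z - y) < e} \<subseteq> S)"
     and T: "\<forall>y\<in>T. \<exists>F. finite F \<and> F \<subseteq> P \<and> (\<exists>e>0. {z. \<forall>p\<in>F. p (z - y) < e} \<subseteq> T)"
  show "\<forall>y\<in>S \<inter> T. \<exists>F. finite F \<and> F \<subseteq> P \<and> (\<exists>e>0. {z. \<forall>p\<in>F. p (z - y) < e} \<subseteq> S \<inter> T)"
  proof
    fix y assume y: "y \<in> S \<inter> T"
    from y S obtain F1 e1 where 1: "finite F1" "F1 \<subseteq> P" "e1 > 0" "{z. \<forall>p\<in>F1. p (z - y) < e1} \<subseteq> S"
      by (meson IntD1)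
    from y T obtain F2 e2 where 2: "finite F2" "F2 \<subseteq> P" "e2 > 0" "{z. \<forall>p\<in>F2. p (z - y) < e2} \<subseteq> T"
      by (meson IntD2)
    have "{z. \<forall>p\<in>F1 \<union> F2. p (z - y) < min e1 e2} \<subseteq> S \<inter> T"
    proof
      fix z assume "z \<in> {z. \<forall>p\<in>F1 \<union> F2. p (z - y) < min e1 e2}"
      then have "z \<in> {z. \<forall>p\<in>F1. p (z - y) < e1}" "z \<in> {z. \<forall>p\<in>F2. p (z - y) < e2}" by auto
      then show "z \<in> S \<inter> T" using 1(4) 2(4) by blast
    qed
    then show "\<exists>F. finite F \<and> F \<subseteq> P \<and> (\<exists>e>0. {z. \<forall>p\<in>F. p (z - y) < e} \<subseteq> S \<inter> T)"
      using 1 2 by (intro exI[of _ "F1 \<union> F2"]) (auto intro!: exI[of _ "min e1 e2"])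
  qed
next
  fix K :: "'b set set"
  assume "Ball K (\<lambda>U. \<forall>y\<in>U. \<exists>F. finite F \<and> F \<subseteq> P \<and> (\<exists>e>0. {z. \<forall>p\<in>F. p (z - y) < e} \<subseteq> U))"
  then show "\<forall>y\<in>\<Union>K. \<exists>F. finite F \<and> F \<subseteq> P \<and> (\<exists>e>0. {z. \<forall>p\<in>F. p (z - y) < e} \<subseteq> \<Union>K)"
  proof (intro ballI)
    fix y assume h: "Ball K (\<lambda>U. \<forall>y\<in>U. \<exists>F. finite F \<and> F \<subseteq> P \<and> (\<exists>e>0. {z. \<forall>p\<in>F. p (z - y) < e} \<subseteq> U))"
      and "y \<in> \<Union>K"
    then obtain U where U: "U \<in> K" "y \<in> U" by blast
    with h obtain F e where "finite F" "F \<subseteq> P" "e > 0" "{z. \<forall>p\<in>F. p (z - y) < e} \<subseteq> U" by meson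
    moreover have "U \<subseteq> \<Union>K" using U by blast
    ultimately show "\<exists>F. finite F \<and> F \<subseteq> P \<and> (\<exists>e>0. {z. \<forall>p\<in>F. p (z - y) < e} \<subseteq> \<Union>K)"
      by (meson subset_trans)
  qed
qed

lemma lc_openin:
  fixes P :: "('b::complex_vector \<Rightarrow> real) set"
  shows "openin (lc_topology P) U \<longleftrightarrow> (\<forall>y\<in>U. \<exists>F. finite F \<and> F \<subseteq> P \<and>
       (\<exists>e>0. {z. \<forall>p\<in>F. p (z - y) < e} \<subseteq> U))"
  unfolding lc_topology_def using lc_istopology[of P] by simp

lemma lc_topspace [simp]: "topspace (lc_topology P) = UNIV"
proof -
  have "openin (lc_topology P) UNIV" unfolding lc_openin
    by (intro ballI exI[of _ "{}"]) (auto intro: exI[of _ "1::real"])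
  then show ?thesis by (metis openin_subset top.extremum_uniqueI)
qed

lemma lc_continuous:
  fixes \<phi> :: "'b::complex_vector \<Rightarrow> complex"
  assumes P: "\<forall>p\<in>P. seminorm p" and F: "finite F" "F \<subseteq> P"
    and lin: "\<And>x y. \<phi> (x - y) = \<phi> x - \<phi> y"
    and bnd: "\<And>w. cmod (\<phi> w) \<le> C * (\<Sum>p\<in>F. p w)"
  shows "continuous_map (lc_topology P) euclidean \<phi>"
  unfolding continuous_map_def
proof (intro conjI allI impI)
  show "\<phi> \<in> topspace (lc_topology P) \<rightarrow> topspace euclidean" by simp
  fix U :: "complex set" assume "openin euclidean U"
  then have U: "open U" by simp
  show "openin (lc_topology P) {x \<in> topspace (lc_topology P). \<phi> x \<in> U}"
    unfolding lc_openin
  proof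
    fix y assume "y \<in> {x \<in> topspace (lc_topology P). \<phi> x \<in> U}"
    then have "\<phi> y \<in> U" by simp
    then obtain \<epsilon> where \<epsilon>: "\<epsilon> > 0" "ball (\<phi> y) \<epsilon> \<subseteq> U" using U open_contains_ball by blast
    define e where "e = \<epsilon> / ((\<bar>C\<bar> + 1) * (real (card F) + 1))"
    have e: "e > 0" unfolding e_def using \<epsilon> by (simp add: add_pos_nonneg)
    have "{z. \<forall>p\<in>F. p (z - y) < e} \<subseteq> {x \<in> topspace (lc_topology P). \<phi> x \<in> U}"
    proof clarsimp
      fix z assume z: "\<forall>p\<in>F. p (z - y) < e"
      have "(\<Sum>p\<in>F. p (z - y)) \<le> (\<Sum>p\<in>F. e)" using z by (intro sum_mono) auto
      then have s: "(\<Sum>p\<in>F. p (z - y)) \<le> real (card F) * e" by simp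
      have s0: "(\<Sum>p\<in>F. p (z - y)) \<ge> 0" using P F by (intro sum_nonneg) (auto intro: seminorm_nonneg)
      have "cmod (\<phi> z - \<phi> y) \<le> C * (\<Sum>p\<in>F. p (z - y))" using bnd[of "z - y"] lin by simp
      also have "\<dots> \<le> \<bar>C\<bar> * (\<Sum>p\<in>F. p (z - y))" using s0 by (simp add: mult_right_mono)
      also have "\<dots> \<le> \<bar>C\<bar> * (real (card F) * e)" using s by (simp add: mult_left_mono)
      also have "\<dots> < \<epsilon>"
      proof -
        have "0 \<le> \<bar>C\<bar> * e + real (card F) * e" using e by simp
        then have "\<bar>C\<bar> * (real (card F) * e) \<le> (\<bar>C\<bar> + 1) * (real (card F) + 1) * e - e"
          by (simp add: algebra_simps)
        also have "(\<bar>C\<bar> + 1) * (real (card F) + 1) * e = \<epsilon>" unfolding e_def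
          by (simp add: add_pos_nonneg)
        finally show ?thesis using e by simp
      qed
      finally have "\<phi> z \<in> ball (\<phi> y) \<epsilon>" by (simp add: dist_norm norm_minus_commute)
      then show "\<phi> z \<in> U" using \<epsilon> by blast
    qed
    then show "\<exists>F. finite F \<and> F \<subseteq> P \<and> (\<exists>e>0. {z. \<forall>p\<in>F. p (z - y) < e} \<subseteq> {x \<in> topspace (lc_topology P). \<phi> x \<in> U})"
      using F e by blast
  qed
qed

lemma exists_dual_sep:
  fixes P :: "('b::complex_vector \<Rightarrow> real) set"
  assumes P: "\<forall>p\<in>P. seminorm p" and F: "finite F" "F \<subseteq> P" and e: "e > 0"
    and K: "convex K" "K \<noteq> {}" and Ke: "\<And>k. k \<in> K \<Longrightarrow> e \<le> (\<Sum>p\<in>F. p k)"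
  shows "\<exists>\<phi>\<in>lc_dual P. \<forall>k\<in>K. Re (\<phi> k) \<ge> 1"
proof -
  have sp: "seminorm p" if "p \<in> F" for p using P F that by blast
  define q where "q z = (\<Sum>p\<in>F. p z) / e" for z
  have "sublin q" unfolding sublin_def
  proof (intro conjI allI impI)
    fix x y
    have "(\<Sum>p\<in>F. p (x + y)) \<le> (\<Sum>p\<in>F. p x + p y)" by (intro sum_mono seminorm_add sp)
    then show "q (x + y) \<le> q x + q y" unfolding q_def using e by (simp add: sum.distrib) (metis add_divide_distrib divide_right_mono less_imp_le)
  next
    fix t :: real and x assume "t \<ge> 0"
    then show "q (t *\<^sub>R x) = t * q x" unfolding q_def by (simp add: seminorm_scaleR sp sum_distrib_left)
  qed
  moreover have "q k \<ge> 1" if "k \<in> K" for k using Ke[OF that] e unfolding q_def by simp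
  ultimately obtain \<psi> where \<psi>: "linear \<psi>" "\<forall>x. \<psi> x \<le> q x" "\<forall>k\<in>K. \<psi> k \<ge> 1"
    using SEP_real[OF _ K] by blast
  have qm: "q (- x) = q x" for x unfolding q_def by (simp add: seminorm_minus sp)
  have qi: "q (scaleC \<i> x) = q x" for x unfolding q_def by (simp add: seminorm_scaleC sp)
  have apsi: "\<bar>\<psi> x\<bar> \<le> q x" for x using \<psi>(2) qm[of x] \<psi>(1)
    by (metis abs_le_iff linear_neg minus_le_iff)
  have bnd: "cmod (cplx \<psi> w) \<le> (2 / e) * (\<Sum>p\<in>F. p w)" for w
  proof -
    have "cmod (cplx \<psi> w) \<le> \<bar>\<psi> w\<bar> + \<bar>\<psi> (scaleC \<i> w)\<bar>" using cmod_le[of "cplx \<psi> w"] by simp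
    also have "\<dots> \<le> q w + q w" using apsi[of w] apsi[of "scaleC \<i> w"] qi by simp
    finally show ?thesis unfolding q_def by simp
  qed
  have "cplx \<psi> \<in> lc_dual P" unfolding lc_dual_def
    using cplx_add[OF \<psi>(1)] cplx_scaleC[OF \<psi>(1)]
      lc_continuous[OF P F cplx_diff[OF \<psi>(1)] bnd] by blast
  then show ?thesis using \<psi>(3) by (intro bexI[of _ "cplx \<psi>"]) auto
qed



definition Lset :: "'a::complex_vector set \<Rightarrow> 'a \<Rightarrow> 'a \<Rightarrow> complex set" where
  "Lset \<Omega> a v = {l. a + scaleC l v \<in> \<Omega>}"

lemma one_open_Lset: assumes "one_open \<Omega>" shows "open (Lset \<Omega> a v)"
proof (cases "v = 0")
  case True
  then have "Lset \<Omega> a v = (if a \<in> \<Omega> then UNIV else {})" unfolding Lset_def by auto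
  then show ?thesis by simp
next
  case False
  then show ?thesis using assms unfolding one_open_def Lset_def by blast
qed

lemma hol_line_char:
  fixes g :: "'a::complex_vector \<Rightarrow> complex"
  assumes op: "one_open \<Omega>"
  shows "(\<forall>a\<in>\<Omega>. \<forall>v. \<exists>r>0. (\<forall>l\<in>ball 0 r. a + scaleC l v \<in> \<Omega>) \<and>
             (\<lambda>l. g (a + scaleC l v)) holomorphic_on ball 0 r)
         \<longleftrightarrow> (\<forall>a v. (\<lambda>l. g (a + scaleC l v)) holomorphic_on Lset \<Omega> a v)"
proof
  assume H: "\<forall>a\<in>\<Omega>. \<forall>v. \<exists>r>0. (\<forall>l\<in>ball 0 r. a + scaleC l v \<in> \<Omega>) \<and>
             (\<lambda>l. g (a + scaleC l v)) holomorphic_on ball 0 r"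
  show "\<forall>a v. (\<lambda>l. g (a + scaleC l v)) holomorphic_on Lset \<Omega> a v"
  proof (intro allI)
    fix a v
    show "(\<lambda>l. g (a + scaleC l v)) holomorphic_on Lset \<Omega> a v"
      unfolding holomorphic_on_def
    proof
      fix l0 assume "l0 \<in> Lset \<Omega> a v"
      then have a': "a + scaleC l0 v \<in> \<Omega>" unfolding Lset_def by simp
      then obtain r where r: "r > 0" and hol: "(\<lambda>l. g (a + scaleC l0 v + scaleC l v)) holomorphic_on ball 0 r"
        using H by blast
      have "(\<lambda>l. g (a + scaleC l0 v + scaleC l v)) field_differentiable (at 0)"
        using hol r by (intro holomorphic_on_imp_differentiable_at[of _ "ball 0 r"]) auto
      then have d: "(\<lambda>l. g (a + scaleC l0 v + scaleC l v)) field_differentiable (at ((\<lambda>l. l - l0) l0))" by simp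
      have "((\<lambda>l. g (a + scaleC l0 v + scaleC l v)) \<circ> (\<lambda>l. l - l0)) field_differentiable (at l0)"
      proof -
        have "(\<lambda>l. l - l0) field_differentiable at l0" unfolding field_differentiable_def
          by (rule exI[of _ 1]) (auto intro!: derivative_eq_intros)
        then show ?thesis
          using field_differentiable_compose[of "\<lambda>l. l - l0" l0 "\<lambda>l. g (a + scaleC l0 v + scaleC l v)"] d
          by simp
      qed
      moreover have "((\<lambda>l. g (a + scaleC l0 v + scaleC l v)) \<circ> (\<lambda>l. l - l0)) = (\<lambda>l. g (a + scaleC l v))"
      proof
        fix l
        have "a + scaleC l0 v + scaleC (l - l0) v = a + scaleC l v"
          by (simp add: scaleC_diff_left)
        then show "((\<lambda>l. g (a + scaleC l0 v + scaleC l v)) \<circ> (\<lambda>l. l - l0)) l = g (a + scaleC l v)"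
          by (simp add: add.assoc)
      qed
      ultimately show "(\<lambda>l. g (a + scaleC l v)) field_differentiable (at l0 within Lset \<Omega> a v)"
        by (metis field_differentiable_at_within)
    qed
  qed
next
  assume H: "\<forall>a v. (\<lambda>l. g (a + scaleC l v)) holomorphic_on Lset \<Omega> a v"
  show "\<forall>a\<in>\<Omega>. \<forall>v. \<exists>r>0. (\<forall>l\<in>ball 0 r. a + scaleC l v \<in> \<Omega>) \<and>
             (\<lambda>l. g (a + scaleC l v)) holomorphic_on ball 0 r"
  proof (intro ballI allI)
    fix a v assume a: "a \<in> \<Omega>"
    have "0 \<in> Lset \<Omega> a v" using a unfolding Lset_def by simp
    then obtain r where r: "r > 0" "ball 0 r \<subseteq> Lset \<Omega> a v"
      using one_open_Lset[OF op] open_contains_ball by blast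
    then show "\<exists>r>0. (\<forall>l\<in>ball 0 r. a + scaleC l v \<in> \<Omega>) \<and> (\<lambda>l. g (a + scaleC l v)) holomorphic_on ball 0 r"
      using H holomorphic_on_subset unfolding Lset_def by blast
  qed
qed

lemma HG_char:
  assumes "one_open \<Omega>"
  shows "f \<in> HG P \<Omega> \<longleftrightarrow> (\<forall>\<phi>\<in>lc_dual P. \<forall>a v. (\<lambda>l. \<phi> (f (a + scaleC l v))) holomorphic_on Lset \<Omega> a v)"
proof -
  have "f \<in> HG P \<Omega> \<longleftrightarrow> (\<forall>\<phi>\<in>lc_dual P. \<forall>a\<in>\<Omega>. \<forall>v. \<exists>r>0. (\<forall>l\<in>ball 0 r. a + scaleC l v \<in> \<Omega>) \<and>
             (\<lambda>l. (\<lambda>x. \<phi> (f x)) (a + scaleC l v)) holomorphic_on ball 0 r)"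
    unfolding HG_def by blast
  also have "\<dots> \<longleftrightarrow> (\<forall>\<phi>\<in>lc_dual P. \<forall>a v. (\<lambda>l. (\<lambda>x. \<phi> (f x)) (a + scaleC l v)) holomorphic_on Lset \<Omega> a v)"
  proof (rule ball_cong[OF refl])
    fix \<phi> show "(\<forall>a\<in>\<Omega>. \<forall>v. \<exists>r>0. (\<forall>l\<in>ball 0 r. a + scaleC l v \<in> \<Omega>) \<and>
             (\<lambda>l. (\<lambda>x. \<phi> (f x)) (a + scaleC l v)) holomorphic_on ball 0 r) \<longleftrightarrow>
      (\<forall>a v. (\<lambda>l. (\<lambda>x. \<phi> (f x)) (a + scaleC l v)) holomorphic_on Lset \<Omega> a v)"
      by (rule hol_line_char[OF assms])
  qed
  finally show ?thesis by simp
qed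

lemma HG_scalar_char:
  assumes "one_open \<Omega>"
  shows "h \<in> HG_scalar \<Omega> \<longleftrightarrow> (\<forall>a v. (\<lambda>l. h (a + scaleC l v)) holomorphic_on Lset \<Omega> a v)"
  unfolding HG_scalar_def using hol_line_char[OF assms] by blast

lemma dual_add: "\<phi> \<in> lc_dual P \<Longrightarrow> \<phi> (x + y) = \<phi> x + \<phi> y"
  unfolding lc_dual_def by blast
lemma dual_scaleC: "\<phi> \<in> lc_dual P \<Longrightarrow> \<phi> (scaleC c x) = c * \<phi> x"
  unfolding lc_dual_def by blast
lemma dual_diff: "\<phi> \<in> lc_dual P \<Longrightarrow> \<phi> (x - y) = \<phi> x - \<phi> y"
proof -
  assume d: "\<phi> \<in> lc_dual P"
  have "x - y = x + scaleC (-1) y" by (simp add: scaleC_minus_left scaleC_one)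
  then have "\<phi> (x - y) = \<phi> x + (-1) * \<phi> y" using dual_add[OF d] dual_scaleC[OF d] by metis
  then show ?thesis by simp
qed

lemma HG_comp_dual:
  assumes "one_open \<Omega>" "f \<in> HG P \<Omega>" "\<phi> \<in> lc_dual P"
  shows "(\<lambda>x. \<phi> (f x)) \<in> HG_scalar \<Omega>"
  using assms by (simp add: HG_char HG_scalar_char)

lemma HG_scalar_times_vec:
  assumes "one_open \<Omega>" "h \<in> HG_scalar \<Omega>" "f \<in> HG P \<Omega>"
  shows "(\<lambda>x. scaleC (h x) (f x)) \<in> HG P \<Omega>"
  unfolding HG_char[OF assms(1)]
proof (intro ballI allI)
  fix \<phi> a v assume d: "\<phi> \<in> lc_dual P"
  have "(\<lambda>l. h (a + scaleC l v) * \<phi> (f (a + scaleC l v))) holomorphic_on Lset \<Omega> a v"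
    using assms d by (intro holomorphic_on_mult) (auto simp: HG_char HG_scalar_char)
  then show "(\<lambda>l. \<phi> (scaleC (h (a + scaleC l v)) (f (a + scaleC l v)))) holomorphic_on Lset \<Omega> a v"
    using dual_scaleC[OF d] by simp
qed

lemma HG_scalar_const_vec:
  assumes "one_open \<Omega>" "h \<in> HG_scalar \<Omega>"
  shows "(\<lambda>x. scaleC (h x) y) \<in> HG P \<Omega>"
proof -
  have "(\<lambda>x. y) \<in> HG P \<Omega>" unfolding HG_char[OF assms(1)] by simp
  from HG_scalar_times_vec[OF assms this] show ?thesis .
qed

lemma HG_add_const:
  assumes "one_open \<Omega>" "f \<in> HG P \<Omega>"
  shows "(\<lambda>x. f x + y) \<in> HG P \<Omega>"
  unfolding HG_char[OF assms(1)]
proof (intro ballI allI)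
  fix \<phi> a v assume d: "\<phi> \<in> lc_dual P"
  have "(\<lambda>l. \<phi> (f (a + scaleC l v)) + \<phi> y) holomorphic_on Lset \<Omega> a v"
    using assms d by (intro holomorphic_intros) (auto simp: HG_char)
  then show "(\<lambda>l. \<phi> (f (a + scaleC l v) + y)) holomorphic_on Lset \<Omega> a v"
    using dual_add[OF d] by simp
qed



lemma HG_scalar_mult:
  assumes "one_open \<Omega>" "h \<in> HG_scalar \<Omega>" "g \<in> HG_scalar \<Omega>"
  shows "(\<lambda>x. h x * g x) \<in> HG_scalar \<Omega>"
  using assms by (auto simp: HG_scalar_char intro!: holomorphic_intros)

lemma HG_scalar_const: "one_open \<Omega> \<Longrightarrow> (\<lambda>x. c) \<in> HG_scalar \<Omega>"
  by (simp add: HG_scalar_char)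

lemma HG_scalar_inv_shift:
  assumes "one_open \<Omega>" "h \<in> HG_scalar \<Omega>" "\<And>x. x \<in> \<Omega> \<Longrightarrow> h x \<noteq> c"
  shows "(\<lambda>x. 1 / (h x - c)) \<in> HG_scalar \<Omega>"
  unfolding HG_scalar_char[OF assms(1)]
proof (intro allI)
  fix a v
  show "(\<lambda>l. 1 / (h (a + scaleC l v) - c)) holomorphic_on Lset \<Omega> a v"
    using assms by (intro holomorphic_intros) (auto simp: HG_scalar_char Lset_def)
qed

lemma partA:
  fixes \<Omega>0 \<Omega> C :: "'a::complex_vector set" and P :: "('b::complex_vector \<Rightarrow> real) set"
  assumes open0: "one_open \<Omega>0" and open1: "one_open \<Omega>"
    and C_sub: "C \<subseteq> \<Omega>0 \<inter> \<Omega>"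
    and sc: "sc_hausdorff_lcs P" and nz: "(UNIV :: 'b set) \<noteq> {0}" and ue: "unique_ext_property P \<Omega>0 \<Omega> C"
  shows "(\<forall>h\<in>HG_scalar \<Omega>0. \<exists>H. is_ext_scalar \<Omega> C h H \<and>
              (\<forall>H'. is_ext_scalar \<Omega> C h H' \<longrightarrow> (\<forall>x\<in>\<Omega>. H' x = H x)))
        \<and> (\<forall>h\<in>HG_scalar \<Omega>0. \<forall>f\<in>HG P \<Omega>0. \<forall>H F. is_ext_scalar \<Omega> C h H \<and> is_ext P \<Omega> C f F \<longrightarrow>
              is_ext P \<Omega> C (\<lambda>x. scaleC (h x) (f x)) (\<lambda>x. scaleC (H x) (F x)))
        \<and> (\<forall>h\<in>HG_scalar \<Omega>0. \<forall>H. is_ext_scalar \<Omega> C h H \<longrightarrow> H ` \<Omega> \<subseteq> h ` \<Omega>0)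
        \<and> (\<forall>f\<in>HG P \<Omega>0. \<forall>F. is_ext P \<Omega> C f F \<longrightarrow> F ` \<Omega> \<subseteq> closed_convex_hull P (f ` \<Omega>0))"
proof -
  have Psn: "\<forall>p\<in>P. seminorm p" and Hs: "Hausdorff_space (lc_topology P)"
    using sc unfolding sc_hausdorff_lcs_def by auto
  obtain y :: 'b where y: "y \<noteq> 0" using nz by blast
  obtain p where pP: "p \<in> P" and py: "p y \<noteq> 0"
  proof (rule ccontr)
    assume "\<not> thesis"
    then have all0: "\<forall>p\<in>P. p y = 0" using that by blast
    have h0: "(0::'b) \<in> topspace (lc_topology P) \<and> y \<in> topspace (lc_topology P) \<and> 0 \<noteq> y" using y by simp
    have "\<exists>U V. openin (lc_topology P) U \<and> openin (lc_topology P) V \<and> 0 \<in> U \<and> y \<in> V \<and> disjnt U V"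
      using Hs h0 unfolding Hausdorff_space_def by (elim allE[of _ 0] allE[of _ y] impE)
    then obtain U V where UV: "openin (lc_topology P) U" "openin (lc_topology P) V" "0 \<in> U" "y \<in> V" "disjnt U V"
      by blast
    have "\<exists>F. finite F \<and> F \<subseteq> P \<and> (\<exists>e>0. {z. \<forall>p\<in>F. p (z - 0) < e} \<subseteq> U)"
      using UV(1,3) unfolding lc_openin by (rule bspec)
    then obtain F e where Fe: "finite F" "F \<subseteq> P" "e > 0" "{z. \<forall>p\<in>F. p (z - 0) < e} \<subseteq> U"
      by blast
    have "y \<in> {z. \<forall>p\<in>F. p (z - 0) < e}"
    proof (simp, intro ballI)
      fix q assume "q \<in> F"
      then have "q \<in> P" using Fe(2) by blast
      then have "q y = 0" using all0 by blast
      then show "q y < e" using Fe(3) by simp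
    qed
    then have "y \<in> U" using Fe(4) by blast
    then show False using UV(4,5) by (auto simp: disjnt_def)
  qed
  have pypos: "p y > 0" using seminorm_nonneg[of p y] Psn pP py by auto
  obtain \<phi>0 where d0: "\<phi>0 \<in> lc_dual P" and \<phi>0y: "Re (\<phi>0 y) \<ge> 1"
    using exists_dual_sep[OF Psn, of "{p}" "p y" "{y}"] pP pypos by auto
  have \<phi>0nz: "\<phi>0 y \<noteq> 0" using \<phi>0y by auto

  have A1: "\<exists>H. is_ext_scalar \<Omega> C h H \<and> (\<forall>H'. is_ext_scalar \<Omega> C h H' \<longrightarrow> (\<forall>x\<in>\<Omega>. H' x = H x))"
    if h: "h \<in> HG_scalar \<Omega>0" for h
  proof -
    have fy: "(\<lambda>x. scaleC (h x) y) \<in> HG P \<Omega>0" by (rule HG_scalar_const_vec[OF open0 h])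
    obtain F where F: "is_ext P \<Omega> C (\<lambda>x. scaleC (h x) y) F"
      and Fu: "\<forall>F'. is_ext P \<Omega> C (\<lambda>x. scaleC (h x) y) F' \<longrightarrow> (\<forall>x\<in>\<Omega>. F' x = F x)"
      using ue fy unfolding unique_ext_property_def by blast
    define H where "H x = \<phi>0 (F x) * inverse (\<phi>0 y)" for x
    have "H \<in> HG_scalar \<Omega>" unfolding H_def
      using HG_scalar_mult[OF open1 HG_comp_dual[OF open1 _ d0] HG_scalar_const[OF open1]] F
      unfolding is_ext_def by blast
    moreover have "H x = h x" if "x \<in> C" for x
      using F that d0 \<phi>0nz unfolding is_ext_def H_def by (simp add: dual_scaleC)
    ultimately have ext: "is_ext_scalar \<Omega> C h H" unfolding is_ext_scalar_def by blast
    have "H' x = H x" if H': "is_ext_scalar \<Omega> C h H'" and x: "x \<in> \<Omega>" for H' x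
    proof -
      have "is_ext P \<Omega> C (\<lambda>x. scaleC (h x) y) (\<lambda>x. scaleC (H' x) y)"
        using H' HG_scalar_const_vec[OF open1] unfolding is_ext_scalar_def is_ext_def by auto
      then have "scaleC (H' x) y = F x" using Fu x by blast
      then have "\<phi>0 (F x) = H' x * \<phi>0 y" using dual_scaleC[OF d0] by metis
      then show ?thesis unfolding H_def using \<phi>0nz by simp
    qed
    then show ?thesis using ext by blast
  qed
  have Uniq: "H1 x = H2 x" if "h \<in> HG_scalar \<Omega>0" "is_ext_scalar \<Omega> C h H1" "is_ext_scalar \<Omega> C h H2" "x \<in> \<Omega>"
    for h H1 H2 x
    using A1[OF that(1)] that by metis

  have A2: "is_ext P \<Omega> C (\<lambda>x. scaleC (h x) (f x)) (\<lambda>x. scaleC (H x) (F x))"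
    if "is_ext_scalar \<Omega> C h H" "is_ext P \<Omega> C f F" for h f H F
    using that HG_scalar_times_vec[OF open1] unfolding is_ext_scalar_def is_ext_def by auto

  have A3: "H ` \<Omega> \<subseteq> h ` \<Omega>0" if h: "h \<in> HG_scalar \<Omega>0" and H: "is_ext_scalar \<Omega> C h H" for h H
  proof
    fix w assume "w \<in> H ` \<Omega>"
    then obtain x0 where x0: "x0 \<in> \<Omega>" "w = H x0" by blast
    show "w \<in> h ` \<Omega>0"
    proof (rule ccontr)
      assume nin: "w \<notin> h ` \<Omega>0"
      define g where "g x = 1 / (h x - w)" for x
      have g: "g \<in> HG_scalar \<Omega>0" unfolding g_def
        by (rule HG_scalar_inv_shift[OF open0 h]) (use nin in auto)
      obtain G where G: "is_ext_scalar \<Omega> C g G" using A1[OF g] by blast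
      have one0: "(\<lambda>x. 1) \<in> HG_scalar \<Omega>0" by (rule HG_scalar_const[OF open0])
      have e1: "is_ext_scalar \<Omega> C (\<lambda>x. 1) (\<lambda>x. 1)"
        unfolding is_ext_scalar_def using HG_scalar_const[OF open1] by simp
      have e2: "is_ext_scalar \<Omega> C (\<lambda>x. 1) (\<lambda>x. (H x - w) * G x)"
        unfolding is_ext_scalar_def
      proof
        show "(\<lambda>x. (H x - w) * G x) \<in> HG_scalar \<Omega>"
        proof (rule HG_scalar_mult[OF open1])
          show "(\<lambda>x. H x - w) \<in> HG_scalar \<Omega>" using H unfolding is_ext_scalar_def
            by (auto simp: HG_scalar_char[OF open1] intro!: holomorphic_intros)
          show "G \<in> HG_scalar \<Omega>" using G unfolding is_ext_scalar_def by blast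
        qed
      next
        show "\<forall>x\<in>C. (H x - w) * G x = 1"
        proof
          fix x assume xC: "x \<in> C"
          then have "x \<in> \<Omega>0" using C_sub by blast
          then have "h x \<noteq> w" using nin by blast
          then show "(H x - w) * G x = 1" using H G xC unfolding is_ext_scalar_def g_def by simp
        qed
      qed
      have "(H x0 - w) * G x0 = 1" using Uniq[OF one0 e2 e1 x0(1)] .
      then show False using x0 by simp
    qed
  qed

  have A4: "F ` \<Omega> \<subseteq> closed_convex_hull P (f ` \<Omega>0)" if f: "f \<in> HG P \<Omega>0" and F: "is_ext P \<Omega> C f F" for f F
  proof
    fix w assume "w \<in> F ` \<Omega>"
    then obtain x0 where x0: "x0 \<in> \<Omega>" "w = F x0" by blast
    have O0: "\<Omega>0 \<noteq> {}"
    proof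
      assume O0: "\<Omega>0 = {}"
      then have C0: "C = {}" using C_sub by blast
      obtain F0 where F0u: "\<forall>F'. is_ext P \<Omega> C f F' \<longrightarrow> (\<forall>x\<in>\<Omega>. F' x = F0 x)"
        using ue f unfolding unique_ext_property_def by blast
      have "is_ext P \<Omega> C f (\<lambda>x. F x + y)" unfolding is_ext_def C0
        using F HG_add_const[OF open1] unfolding is_ext_def by blast
      then have "F x0 + y = F0 x0" using F0u x0 by blast
      moreover have "F x0 = F0 x0" using F0u x0 F by blast
      ultimately show False using y by simp
    qed
    show "w \<in> closed_convex_hull P (f ` \<Omega>0)"
    proof (rule ccontr)
      assume nin: "w \<notin> closed_convex_hull P (f ` \<Omega>0)"
      then obtain T where T: "w \<in> T" "openin (lc_topology P) T" "\<forall>s. s \<in> convex hull (f ` \<Omega>0) \<longrightarrow> s \<notin> T"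
        unfolding closed_convex_hull_def in_closure_of by auto
      have "\<exists>F. finite F \<and> F \<subseteq> P \<and> (\<exists>e>0. {z. \<forall>p\<in>F. p (z - w) < e} \<subseteq> T)"
        using T(2,1) unfolding lc_openin by (rule bspec)
      then obtain F0 e where Fe: "finite F0" "F0 \<subseteq> P" "e > 0" "{z. \<forall>p\<in>F0. p (z - w) < e} \<subseteq> T"
        by blast
      define K where "K = (\<lambda>s. s - w) ` (convex hull (f ` \<Omega>0))"
      have Kc: "convex K" unfolding K_def by simp
      have Kne: "K \<noteq> {}" unfolding K_def using O0 by (simp add: convex_hull_eq_empty)
      have Ke: "e \<le> (\<Sum>p\<in>F0. p k)" if kK: "k \<in> K" for k
      proof -
        obtain s where s: "s \<in> convex hull (f ` \<Omega>0)" "k = s - w" using kK unfolding K_def by blast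
        then have "s \<notin> T" using T by blast
        then obtain q where q: "q \<in> F0" "\<not> q (s - w) < e" using Fe(4) by blast
        have sF: "seminorm r" if "r \<in> F0" for r using Fe(2) Psn that by blast
        have "q (s - w) \<le> (\<Sum>p\<in>F0. p (s - w))"
          by (rule member_le_sum) (use q(1) Fe(1) sF seminorm_nonneg in auto)
        then show ?thesis using q s by simp
      qed
      obtain \<phi> where d: "\<phi> \<in> lc_dual P" and \<phi>K: "\<forall>k\<in>K. Re (\<phi> k) \<ge> 1"
        using exists_dual_sep[OF Psn Fe(1,2,3) Kc Kne Ke] by blast
      have e1: "is_ext_scalar \<Omega> C (\<lambda>x. \<phi> (f x)) (\<lambda>x. \<phi> (F x))"
        using F HG_comp_dual[OF open1 _ d] unfolding is_ext_scalar_def is_ext_def by auto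
      have "(\<lambda>x. \<phi> (F x)) ` \<Omega> \<subseteq> (\<lambda>x. \<phi> (f x)) ` \<Omega>0"
        by (rule A3[OF HG_comp_dual[OF open0 f d] e1])
      then obtain x1 where x1: "x1 \<in> \<Omega>0" "\<phi> (F x0) = \<phi> (f x1)" using x0 by blast
      have "f x1 - w \<in> K" unfolding K_def using x1 by (auto intro: hull_subset[THEN subsetD])
      then have "Re (\<phi> (f x1 - w)) \<ge> 1" using \<phi>K by blast
      moreover have "\<phi> (f x1 - w) = 0" using x1 x0 dual_diff[OF d] by simp
      ultimately show False by simp
    qed
  qed
  show ?thesis using A1 A2 A3 A4 by blast
qed



lemma lc_norm_topology:
  "lc_topology {norm :: 'c::complex_banach_algebra_1 \<Rightarrow> real} = euclidean"
proof -
  have "openin (lc_topology {norm :: 'c \<Rightarrow> real}) U \<longleftrightarrow> open U" for U :: "'c set"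
  proof
    assume "openin (lc_topology {norm}) U"
    then have H: "\<forall>y\<in>U. \<exists>F. finite F \<and> F \<subseteq> {norm} \<and> (\<exists>e>0. {z. \<forall>p\<in>F. p (z - y) < e} \<subseteq> U)"
      unfolding lc_openin by blast
    show "open U" unfolding open_contains_ball
    proof
      fix y assume "y \<in> U"
      then obtain F e where Fe: "F \<subseteq> {norm}" "e > 0" "{z. \<forall>p\<in>F. p (z - y) < e} \<subseteq> U" using H by blast
      have "ball y e \<subseteq> {z. \<forall>p\<in>F. p (z - y) < e}"
      proof
        fix z assume "z \<in> ball y e"
        then have "norm (z - y) < e" by (simp add: dist_norm norm_minus_commute)
        then show "z \<in> {z. \<forall>p\<in>F. p (z - y) < e}" using Fe(1) by auto
      qed
      then show "\<exists>e>0. ball y e \<subseteq> U" using Fe by blast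
    qed
  next
    assume "open U"
    show "openin (lc_topology {norm}) U" unfolding lc_openin
    proof
      fix y assume "y \<in> U"
      then obtain e where e: "e > 0" "ball y e \<subseteq> U" using \<open>open U\<close> open_contains_ball by blast
      have "{z. \<forall>p\<in>{norm}. p (z - y) < e} \<subseteq> U"
        using e by (auto simp: dist_norm norm_minus_commute)
      then show "\<exists>F. finite F \<and> F \<subseteq> {norm} \<and> (\<exists>e>0. {z. \<forall>p\<in>F. p (z - y) < e} \<subseteq> U)"
        using e by (intro exI[of _ "{norm}"]) auto
    qed
  qed
  then show ?thesis by (simp add: topology_eq)
qed

lemma norm_dual_cont:
  "\<phi> \<in> lc_dual {norm :: 'c::complex_banach_algebra_1 \<Rightarrow> real} \<Longrightarrow> continuous_on UNIV \<phi>"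
  unfolding lc_dual_def lc_norm_topology by (simp add: continuous_map_iff_continuous)

lemma norm_seminorm: "seminorm (norm :: 'c::complex_banach_algebra_1 \<Rightarrow> real)"
  unfolding seminorm_def by (simp add: norm_triangle_ineq norm_scaleC)

lemma norming:
  fixes x :: "'c::complex_banach_algebra_1"
  assumes "x \<noteq> 0"
  shows "\<exists>\<kappa>. linear \<kappa> \<and> (\<forall>w. \<bar>\<kappa> w\<bar> \<le> norm w) \<and> \<kappa> x = norm x"
proof -
  define q where "q z = norm z / norm x" for z :: 'c
  have nx: "norm x > 0" using assms by simp
  have "sublin q" unfolding sublin_def q_def using nx
    by (auto simp: norm_triangle_ineq add_divide_distrib[symmetric] divide_right_mono)
  moreover have "convex {x}" by simp
  ultimately obtain \<psi> where \<psi>: "linear \<psi>" "\<forall>z. \<psi> z \<le> q z" "\<forall>k\<in>{x}. \<psi> k \<ge> 1"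
    using SEP_real[of q "{x}"] unfolding q_def using nx by auto
  define \<kappa> where "\<kappa> z = norm x * \<psi> z" for z
  have "linear \<kappa>" unfolding \<kappa>_def using \<psi>(1)
    by (intro linearI) (simp_all add: linear_add linear_scale algebra_simps)
  moreover have "\<bar>\<kappa> w\<bar> \<le> norm w" for w
  proof -
    have "\<psi> w \<le> norm w / norm x" "\<psi> (- w) \<le> norm w / norm x" using \<psi>(2) unfolding q_def by (metis norm_minus_cancel)+
    moreover have "\<psi> (- w) = - \<psi> w" using \<psi>(1) by (simp add: linear_neg)
    ultimately have "\<bar>\<psi> w\<bar> \<le> norm w / norm x" by simp
    then show ?thesis unfolding \<kappa>_def using nx by (simp add: abs_mult field_simps)
  qed
  moreover have "\<kappa> x = norm x"
  proof -
    have "\<psi> x \<le> norm x / norm x" using \<psi>(2) unfolding q_def by blast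
    then have "\<psi> x \<le> 1" using nx by simp
    moreover have "\<psi> x \<ge> 1" using \<psi>(3) by simp
    ultimately have "\<psi> x = 1" by simp
    then show ?thesis unfolding \<kappa>_def by simp
  qed
  ultimately show ?thesis by blast
qed

lemma cplx_in_norm_dual:
  fixes \<kappa> :: "'c::complex_banach_algebra_1 \<Rightarrow> real"
  assumes "linear \<kappa>" "\<And>w. \<bar>\<kappa> w\<bar> \<le> K * norm w"
  shows "cplx \<kappa> \<in> lc_dual {norm}" "\<And>w. cmod (cplx \<kappa> w) \<le> 2 * K * norm w"
proof -
  show b: "cmod (cplx \<kappa> w) \<le> 2 * K * norm w" for w
  proof -
    have "cmod (cplx \<kappa> w) \<le> \<bar>\<kappa> w\<bar> + \<bar>\<kappa> (scaleC \<i> w)\<bar>" using cmod_le[of "cplx \<kappa> w"] by simp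
    also have "\<dots> \<le> K * norm w + K * norm w" using assms(2)[of w] assms(2)[of "scaleC \<i> w"]
      by (simp add: norm_scaleC)
    finally show ?thesis by simp
  qed
  have "continuous_map (lc_topology {norm}) euclidean (cplx \<kappa>)"
    by (rule lc_continuous[of "{norm}" "{norm}" _ "2 * K"]) (use norm_seminorm cplx_diff[OF assms(1)] b in auto)
  then show "cplx \<kappa> \<in> lc_dual {norm}" unfolding lc_dual_def
    using cplx_add[OF assms(1)] cplx_scaleC[OF assms(1)] by blast
qed

lemma norm_by_dual:
  fixes z :: "'c::complex_banach_algebra_1"
  assumes "\<And>\<phi>. \<phi> \<in> lc_dual {norm} \<Longrightarrow> (\<forall>w. cmod (\<phi> w) \<le> 2 * norm w) \<Longrightarrow> cmod (\<phi> z) \<le> B"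
  shows "norm z \<le> B"
proof (cases "z = 0")
  case True
  have "(\<lambda>w. 0::complex) \<in> lc_dual {norm}" unfolding lc_dual_def by simp
  then show ?thesis using assms[of "\<lambda>w. 0"] True by simp
next
  case False
  then obtain \<kappa> where \<kappa>: "linear \<kappa>" "\<forall>w. \<bar>\<kappa> w\<bar> \<le> norm w" "\<kappa> z = norm z" using norming by blast
  have "\<bar>\<kappa> w\<bar> \<le> 1 * norm w" for w using \<kappa>(2) by simp
  note c = cplx_in_norm_dual[OF \<kappa>(1) this]
  have "norm z = Re (cplx \<kappa> z)" using \<kappa>(3) by simp
  also have "\<dots> \<le> cmod (cplx \<kappa> z)" by (rule complex_Re_le_cmod)
  also have "\<dots> \<le> B" using assms[OF c(1)] c(2) by simp
  finally show ?thesis .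
qed

lemma UBP:
  fixes S :: "'c::complex_banach_algebra_1 set"
  assumes wb: "\<And>\<psi> :: 'c \<Rightarrow>\<^sub>L real. \<exists>B. \<forall>x\<in>S. \<bar>\<psi> x\<bar> \<le> B"
  shows "\<exists>M. \<forall>x\<in>S. norm x \<le> M"
proof -
  define E where "E n = {\<psi> :: 'c \<Rightarrow>\<^sub>L real. \<forall>x\<in>S. \<bar>\<psi> x\<bar> \<le> real n}" for n :: nat
  have clE: "closed (E n)" for n
  proof -
    have "E n = (\<Inter>x\<in>S. {\<psi>. \<bar>blinfun_apply \<psi> x\<bar> \<le> real n})" unfolding E_def by auto
    moreover have "closed {\<psi> :: 'c \<Rightarrow>\<^sub>L real. \<bar>blinfun_apply \<psi> x\<bar> \<le> real n}" for x
      by (intro closed_Collect_le continuous_intros continuous_on_id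
          linear_continuous_on[OF bounded_linear_apply_blinfun])
    ultimately show ?thesis by auto
  qed
  have cover: "(\<Union>n. E n) = UNIV"
  proof -
    have "\<psi> \<in> (\<Union>n. E n)" for \<psi>
    proof -
      obtain B where B: "\<forall>x\<in>S. \<bar>\<psi> x\<bar> \<le> B" using wb by blast
      obtain n :: nat where "B \<le> real n" using real_arch_simple by blast
      then have "\<psi> \<in> E n" using B unfolding E_def by (auto intro: order_trans)
      then show ?thesis by blast
    qed
    then show ?thesis by blast
  qed
  have "\<exists>n. interior (E n) \<noteq> {}"
  proof (rule ccontr)
    assume "\<not> (\<exists>n. interior (E n) \<noteq> {})"
    then have "euclidean interior_of (\<Union>(range E)) = {}"
      using clE by (intro Baire_category_alt) (auto simp: completely_metrizable_space_euclidean)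
    then show False using cover by simp
  qed
  then obtain n \<psi>0 where "\<psi>0 \<in> interior (E n)" by blast
  then obtain r where r: "r > 0" "ball \<psi>0 r \<subseteq> E n" using open_contains_ball open_interior
    by (meson interior_subset subset_trans)
  have "norm x \<le> 4 * real n / r" if x: "x \<in> S" for x
  proof (cases "x = 0")
    case True then show ?thesis using r by simp
  next
    case False
    then obtain \<kappa> where \<kappa>: "linear \<kappa>" "\<forall>w. \<bar>\<kappa> w\<bar> \<le> norm w" "\<kappa> x = norm x" using norming by blast
    have bl: "bounded_linear \<kappa>"
      using \<kappa>(1,2) by (intro bounded_linear_intro[where K=1]) (auto simp: linear_add linear_scale)
    define \<kappa>' where "\<kappa>' = Blinfun \<kappa>"
    have ap: "blinfun_apply \<kappa>' = \<kappa>" unfolding \<kappa>'_def using bl by (rule bounded_linear_Blinfun_apply)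
    have n1: "norm \<kappa>' \<le> 1" by (rule norm_blinfun_bound) (use \<kappa>(2) ap in auto)
    have "\<psi>0 + (r/2) *\<^sub>R \<kappa>' \<in> ball \<psi>0 r" using n1 r by (simp add: dist_norm)
    then have "\<psi>0 + (r/2) *\<^sub>R \<kappa>' \<in> E n" using r by blast
    then have "\<bar>\<psi>0 x + (r/2) * \<kappa> x\<bar> \<le> real n" using x unfolding E_def by (simp add: ap blinfun.add_left blinfun.scaleR_left)
    moreover have "\<psi>0 \<in> E n" using r by (meson centre_in_ball subsetD)
    then have "\<bar>\<psi>0 x\<bar> \<le> real n" using x unfolding E_def by blast
    ultimately have a: "\<bar>\<psi>0 x + (r/2) * norm x\<bar> \<le> real n" "\<bar>\<psi>0 x\<bar> \<le> real n" using \<kappa>(3) by simp_all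
    then have "(r/2) * norm x \<le> 2 * real n" by linarith
    then show ?thesis using r by (simp add: field_simps)
  qed
  then show ?thesis by blast
qed



lemma scal_est:
  fixes g :: "complex \<Rightarrow> complex"
  assumes hol: "g holomorphic_on W" and W: "open W" and sub: "cball s0 (2*\<rho>) \<subseteq> W" and rho: "\<rho> > 0"
    and bnd: "\<And>s. s \<in> cball s0 (2*\<rho>) \<Longrightarrow> cmod (g s) \<le> M"
    and s: "s \<in> cball s0 \<rho>"
  shows "cmod (g s - (g s0 + deriv g s0 * (s - s0))) \<le> (2 * M / \<rho>^2) * cmod (s - s0)^2"
proof -
  define f where "f i = (deriv ^^ i) g" for i
  have hf: "f i holomorphic_on W" for i unfolding f_def by (rule holomorphic_higher_deriv[OF hol W])
  have d: "(f i has_field_derivative f (Suc i) x) (at x within cball s0 \<rho>)" if "x \<in> cball s0 \<rho>" for i x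
  proof -
    have "x \<in> W" using that sub rho by (auto simp: dist_norm)
    then show ?thesis using holomorphic_derivI[OF hf W] unfolding f_def by simp
  qed
  have B: "cmod (f (Suc 1) x) \<le> 2 * M / \<rho>^2" if x: "x \<in> cball s0 \<rho>" for x
  proof -
    have cb: "cball x \<rho> \<subseteq> cball s0 (2*\<rho>)"
    proof
      fix y assume "y \<in> cball x \<rho>"
      then have "dist x y \<le> \<rho>" by simp
      moreover have "dist s0 x \<le> \<rho>" using x by simp
      moreover have "dist s0 y \<le> dist s0 x + dist x y" by (rule dist_triangle)
      ultimately show "y \<in> cball s0 (2*\<rho>)" by simp
    qed
    have "norm ((deriv ^^ 2) g x) \<le> fact 2 * M / \<rho>^2"
    proof (rule Cauchy_inequality)
      show "g holomorphic_on ball x \<rho>" using hol cb sub by (meson ball_subset_cball holomorphic_on_subset subset_trans)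
      show "continuous_on (cball x \<rho>) g" using hol cb sub
        by (meson holomorphic_on_imp_continuous_on continuous_on_subset subset_trans)
      show "0 < \<rho>" by (rule rho)
      show "norm (g y) \<le> M" if "norm (x - y) = \<rho>" for y
        using that cb by (intro bnd) (auto simp: dist_norm)
    qed
    then show ?thesis unfolding f_def by (simp add: numeral_2_eq_2)
  qed
  have "norm (f 0 s - (\<Sum>i\<le>1. f i s0 * (s - s0) ^ i / fact i)) \<le> (2 * M / \<rho>^2) * norm (s - s0) ^ Suc 1 / fact 1"
    by (rule field_Taylor[of "cball s0 \<rho>" 1 f]) (use d B s rho in auto)
  then show ?thesis unfolding f_def by (simp add: power2_eq_square)
qed

lemma dunford:
  fixes u :: "complex \<Rightarrow> 'c::complex_banach_algebra_1"
  assumes W: "open W" and weak: "\<And>\<phi>. \<phi> \<in> lc_dual {norm} \<Longrightarrow> (\<lambda>s. \<phi> (u s)) holomorphic_on W"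
    and s0: "s0 \<in> W"
  shows "\<exists>L. ((\<lambda>s. scaleC (1 / (s - s0)) (u s - u s0)) \<longlongrightarrow> L) (at s0)"
proof -
  obtain R where R: "R > 0" "cball s0 R \<subseteq> W" using W s0 open_contains_cball by blast
  define \<rho> where "\<rho> = R / 2"
  have rho: "\<rho> > 0" "cball s0 (2*\<rho>) \<subseteq> W" using R unfolding \<rho>_def by auto
  have wb: "\<exists>B. \<forall>x\<in>u ` cball s0 R. \<bar>\<psi> x\<bar> \<le> B" for \<psi> :: "'c \<Rightarrow>\<^sub>L real"
  proof -
    have lin: "linear (blinfun_apply \<psi>)" using blinfun.bounded_linear_right[of \<psi>] by (simp add: bounded_linear.linear)
    have "\<bar>blinfun_apply \<psi> w\<bar> \<le> norm \<psi> * norm w" for w using norm_blinfun[of \<psi> w] by simp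
    note c = cplx_in_norm_dual[OF lin this]
    have "continuous_on (cball s0 R) (\<lambda>s. cplx (blinfun_apply \<psi>) (u s))"
      using weak[OF c(1)] R by (meson holomorphic_on_imp_continuous_on continuous_on_subset)
    then have "compact ((\<lambda>s. cplx (blinfun_apply \<psi>) (u s)) ` cball s0 R)"
      by (intro compact_continuous_image) auto
    then obtain B where B: "\<forall>z\<in>(\<lambda>s. cplx (blinfun_apply \<psi>) (u s)) ` cball s0 R. norm z \<le> B"
      using compact_imp_bounded bounded_iff by metis
    have "\<bar>\<psi> x\<bar> \<le> B" if xin: "x \<in> u ` cball s0 R" for x
    proof -
      obtain s where s: "s \<in> cball s0 R" "x = u s" using xin by blast
      have "\<bar>\<psi> x\<bar> = \<bar>Re (cplx (blinfun_apply \<psi>) x)\<bar>" by simp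
      also have "\<dots> \<le> cmod (cplx (blinfun_apply \<psi>) x)" by (rule abs_Re_le_cmod)
      also have "\<dots> \<le> B" using B s by auto
      finally show ?thesis .
    qed
    then show ?thesis by blast
  qed
  obtain M0 where M0: "\<forall>x\<in>u ` cball s0 R. norm x \<le> M0" using UBP[OF wb] by blast
  define M where "M = max M0 0"
  have M: "M \<ge> 0" "\<And>s. s \<in> cball s0 R \<Longrightarrow> norm (u s) \<le> M" using M0 unfolding M_def by force+
  define C where "C = 2 * (2 * M) / \<rho>^2"
  have C: "C \<ge> 0" unfolding C_def using M by simp
  define Q where "Q s = scaleC (1 / (s - s0)) (u s - u s0)" for s
  have est1: "cmod (\<phi> (Q s) - deriv (\<lambda>s. \<phi> (u s)) s0) \<le> C * cmod (s - s0)"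
    if \<phi>: "\<phi> \<in> lc_dual {norm}" "\<forall>w. cmod (\<phi> w) \<le> 2 * norm w" and s: "s \<in> cball s0 \<rho>" "s \<noteq> s0" for \<phi> s
  proof -
    define g where "g s = \<phi> (u s)" for s
    have gb: "cmod (g s) \<le> 2 * M" if "s \<in> cball s0 (2*\<rho>)" for s
    proof -
      have "cmod (g s) \<le> 2 * norm (u s)" using \<phi>(2) unfolding g_def by blast
      also have "\<dots> \<le> 2 * M" using M(2)[of s] that unfolding \<rho>_def by simp
      finally show ?thesis .
    qed
    have e: "cmod (g s - (g s0 + deriv g s0 * (s - s0))) \<le> C * cmod (s - s0)^2"
      unfolding C_def by (rule scal_est[OF _ W rho(2) rho(1) gb s(1)]) (use weak[OF \<phi>(1)] in \<open>simp add: g_def\<close>)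
    have q: "\<phi> (Q s) = (g s - g s0) / (s - s0)"
      unfolding Q_def g_def using dual_scaleC[OF \<phi>(1)] dual_diff[OF \<phi>(1)] by simp
    have nz: "cmod (s - s0) > 0" using s by simp
    have "\<phi> (Q s) - deriv g s0 = (g s - (g s0 + deriv g s0 * (s - s0))) / (s - s0)"
      unfolding q using s by (simp add: field_simps)
    then have "cmod (\<phi> (Q s) - deriv g s0) = cmod (g s - (g s0 + deriv g s0 * (s - s0))) / cmod (s - s0)"
      by (simp add: norm_divide)
    also have "\<dots> \<le> C * cmod (s - s0)^2 / cmod (s - s0)" using e nz by (simp add: divide_right_mono)
    also have "\<dots> = C * cmod (s - s0)" using nz by (simp add: power2_eq_square)
    finally show ?thesis unfolding g_def .
  qed
  have est: "norm (Q s - Q t) \<le> C * (cmod (s - s0) + cmod (t - s0))"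
    if s: "s \<in> cball s0 \<rho>" "s \<noteq> s0" and t: "t \<in> cball s0 \<rho>" "t \<noteq> s0" for s t
  proof (rule norm_by_dual)
    fix \<phi> :: "'c \<Rightarrow> complex" assume \<phi>: "\<phi> \<in> lc_dual {norm}" "\<forall>w. cmod (\<phi> w) \<le> 2 * norm w"
    define d where "d = deriv (\<lambda>s. \<phi> (u s)) s0"
    have "\<phi> (Q s - Q t) = (\<phi> (Q s) - d) - (\<phi> (Q t) - d)" using dual_diff[OF \<phi>(1)] by simp
    then have "cmod (\<phi> (Q s - Q t)) \<le> cmod (\<phi> (Q s) - d) + cmod (\<phi> (Q t) - d)"
      by (metis norm_triangle_ineq4)
    also have "\<dots> \<le> C * cmod (s - s0) + C * cmod (t - s0)"
      using est1[OF \<phi> s] est1[OF \<phi> t] unfolding d_def by (intro add_mono)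
    finally show "cmod (\<phi> (Q s - Q t)) \<le> C * (cmod (s - s0) + cmod (t - s0))" by (simp add: distrib_left)
  qed
  define t where "t n = s0 + of_real (\<rho> / (real n + 1))" for n :: nat
  have tn: "t n \<in> cball s0 \<rho>" "t n \<noteq> s0" "cmod (t n - s0) = \<rho> / (real n + 1)" for n
  proof -
    have pos: "\<rho> / (real n + 1) > 0" using rho(1) by simp
    have le: "\<rho> / (real n + 1) \<le> \<rho>" using rho(1) by (simp add: divide_le_eq)
    have nrm: "cmod (t n - s0) = \<rho> / (real n + 1)" unfolding t_def
      by (simp only: add_diff_cancel_left' norm_of_real abs_of_pos[OF pos])
    then show "cmod (t n - s0) = \<rho> / (real n + 1)" .
    show "t n \<in> cball s0 \<rho>" using nrm le by (simp add: dist_norm norm_minus_commute)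
    show "t n \<noteq> s0" using nrm pos by auto
  qed
  have "Cauchy (\<lambda>n. Q (t n))"
  proof (rule CauchyI)
    fix e :: real assume e: "e > 0"
    obtain N :: nat where N: "2 * C * \<rho> / e < real N" using reals_Archimedean2 by blast
    have "norm (Q (t m) - Q (t n)) < e" if "m \<ge> N" "n \<ge> N" for m n
    proof -
      have a: "\<rho> / (real m + 1) \<le> \<rho> / (real N + 1)" "\<rho> / (real n + 1) \<le> \<rho> / (real N + 1)"
        using that rho(1) by (auto intro!: divide_left_mono)
      have "norm (Q (t m) - Q (t n)) \<le> C * (\<rho> / (real m + 1) + \<rho> / (real n + 1))"
        using est[OF tn(1,2) tn(1,2)] tn(3) by simp
      also have "\<dots> \<le> C * (2 * (\<rho> / (real N + 1)))" using a C by (intro mult_left_mono) auto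
      also have "\<dots> < e"
      proof -
        have "2 * C * \<rho> < e * (real N + 1)" using N e by (simp add: divide_less_eq algebra_simps)
        then show ?thesis by (simp add: divide_less_eq algebra_simps)
      qed
      finally show ?thesis .
    qed
    then show "\<exists>M. \<forall>m\<ge>M. \<forall>n\<ge>M. norm (Q (t m) - Q (t n)) < e" by blast
  qed
  then obtain L where L: "(\<lambda>n. Q (t n)) \<longlonglongrightarrow> L" using Cauchy_convergent_iff convergent_def by blast
  have estL: "norm (Q s - L) \<le> C * cmod (s - s0)" if s: "s \<in> cball s0 \<rho>" "s \<noteq> s0" for s
  proof (rule tendsto_le[OF trivial_limit_sequentially])
    show "((\<lambda>n. norm (Q s - Q (t n))) \<longlongrightarrow> norm (Q s - L)) sequentially"
      by (intro tendsto_intros L)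
    have "(\<lambda>n. \<rho> * inverse (real (Suc n))) \<longlonglongrightarrow> 0"
      by (rule tendsto_mult_right_zero[OF LIMSEQ_inverse_real_of_nat])
    then have "(\<lambda>n. \<rho> / (real n + 1)) \<longlonglongrightarrow> 0" by (simp add: divide_inverse add.commute)
    then have "((\<lambda>n. C * (cmod (s - s0) + \<rho> / (real n + 1))) \<longlongrightarrow> C * (cmod (s - s0) + 0)) sequentially"
      by (intro tendsto_mult tendsto_add tendsto_const)
    then show "((\<lambda>n. C * (cmod (s - s0) + \<rho> / (real n + 1))) \<longlongrightarrow> C * cmod (s - s0)) sequentially"
      by simp
    show "\<forall>\<^sub>F n in sequentially. norm (Q s - Q (t n)) \<le> C * (cmod (s - s0) + \<rho> / (real n + 1))"
      using est[OF s tn(1,2)] tn(3) by simp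
  qed
  have "((\<lambda>s. Q s - L) \<longlongrightarrow> 0) (at s0)"
  proof (rule Lim_null_comparison)
    show "\<forall>\<^sub>F s in at s0. norm (Q s - L) \<le> C * cmod (s - s0)"
      unfolding eventually_at using rho(1) estL by (intro exI[of _ \<rho>]) (auto simp: dist_norm norm_minus_commute)
    show "((\<lambda>s. C * cmod (s - s0)) \<longlongrightarrow> 0) (at s0)"
      by (auto intro!: tendsto_eq_intros)
  qed
  then have "(Q \<longlongrightarrow> L) (at s0)" by (rule LIM_zero_cancel)
  then show ?thesis unfolding Q_def by blast
qed



definition sdiff :: "(complex \<Rightarrow> 'c::complex_banach_algebra_1) \<Rightarrow> complex set \<Rightarrow> bool" where
  "sdiff u W \<longleftrightarrow> (\<forall>s\<in>W. \<exists>L. ((\<lambda>t. scaleC (1 / (t - s)) (u t - u s)) \<longlongrightarrow> L) (at s))"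

lemma bb_scaleC: "bounded_bilinear (\<lambda>(a::complex) (b::'c::complex_banach_algebra_1). scaleC a b)"
proof
  fix a a' :: complex and b b' :: 'c and r :: real
  show "scaleC (a + a') b = scaleC a b + scaleC a' b" by (rule scaleC_add_left)
  show "scaleC a (b + b') = scaleC a b + scaleC a b'" by (rule scaleC_add_right)
  have "r *\<^sub>R a = of_real r * a" by (simp add: scaleR_conv_of_real)
  then show "scaleC (r *\<^sub>R a) b = r *\<^sub>R scaleC a b"
    by (simp only: scaleR_scaleC[of r "scaleC a b"] scaleC_scaleC)
  show "scaleC a (r *\<^sub>R b) = r *\<^sub>R scaleC a b"
    by (simp add: scaleR_scaleC scaleC_scaleC mult.commute)
  show "\<exists>K. \<forall>a b. norm (scaleC a (b::'c)) \<le> norm a * norm b * K"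
    by (rule exI[of _ 1]) (simp add: norm_scaleC)
qed

lemmas tendsto_scaleC = bounded_bilinear.tendsto[OF bb_scaleC]

lemma scaleC_inv_cancel: "t \<noteq> s \<Longrightarrow> scaleC (t - s) (scaleC (1 / (t - s)) x) = (x::'c::complex_banach_algebra_1)"
  by (simp add: scaleC_scaleC scaleC_one)

lemma sdiff_cont:
  assumes "sdiff u W" "s \<in> W"
  shows "(u \<longlongrightarrow> u s) (at s)"
proof -
  obtain L where L: "((\<lambda>t. scaleC (1 / (t - s)) (u t - u s)) \<longlongrightarrow> L) (at s)"
    using assms unfolding sdiff_def by blast
  have "((\<lambda>t. u s + scaleC (t - s) (scaleC (1 / (t - s)) (u t - u s))) \<longlongrightarrow> u s + scaleC (s - s) L) (at s)"
    by (intro tendsto_add tendsto_const tendsto_scaleC L tendsto_diff tendsto_ident_at)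
  then have "((\<lambda>t. u s + scaleC (t - s) (scaleC (1 / (t - s)) (u t - u s))) \<longlongrightarrow> u s) (at s)" by simp
  moreover have "\<forall>\<^sub>F t in at s. u s + scaleC (t - s) (scaleC (1 / (t - s)) (u t - u s)) = u t"
    unfolding eventually_at by (rule exI[of _ 1]) (auto simp: scaleC_inv_cancel)
  ultimately show ?thesis by (rule Lim_transform_eventually)
qed

lemma sdiff_mult:
  assumes u: "sdiff u W" and w: "sdiff w W"
  shows "sdiff (\<lambda>t. u t * w t) W"
  unfolding sdiff_def
proof
  fix s assume s: "s \<in> W"
  obtain Lu where Lu: "((\<lambda>t. scaleC (1 / (t - s)) (u t - u s)) \<longlongrightarrow> Lu) (at s)"
    using u s unfolding sdiff_def by blast
  obtain Lw where Lw: "((\<lambda>t. scaleC (1 / (t - s)) (w t - w s)) \<longlongrightarrow> Lw) (at s)"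
    using w s unfolding sdiff_def by blast
  have eq: "scaleC (1 / (t - s)) (u t * w t - u s * w s) =
     scaleC (1 / (t - s)) (u t - u s) * w t + u s * scaleC (1 / (t - s)) (w t - w s)" for t
  proof -
    have "u t * w t - u s * w s = (u t - u s) * w t + u s * (w t - w s)" by (simp add: algebra_simps)
    then show ?thesis by (simp add: scaleC_add_right scaleC_mult_left[symmetric] scaleC_mult_right[symmetric])
  qed
  have "((\<lambda>t. scaleC (1 / (t - s)) (u t - u s) * w t + u s * scaleC (1 / (t - s)) (w t - w s))
      \<longlongrightarrow> Lu * w s + u s * Lw) (at s)"
    by (intro tendsto_add tendsto_mult Lu Lw tendsto_const sdiff_cont[OF w s])
  then show "\<exists>L. ((\<lambda>t. scaleC (1 / (t - s)) (u t * w t - u s * w s)) \<longlongrightarrow> L) (at s)"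
    unfolding eq by blast
qed

lemma sdiff_inv:
  assumes u: "sdiff u W" and W: "open W" and inv: "\<And>t. t \<in> W \<Longrightarrow> u t * v t = 1 \<and> v t * u t = 1"
  shows "sdiff v W"
  unfolding sdiff_def
proof
  fix s assume s: "s \<in> W"
  obtain Lu where Lu: "((\<lambda>t. scaleC (1 / (t - s)) (u t - u s)) \<longlongrightarrow> Lu) (at s)"
    using u s unfolding sdiff_def by blast
  have uc: "(u \<longlongrightarrow> u s) (at s)" by (rule sdiff_cont[OF u s])
  have evW: "\<forall>\<^sub>F t in at s. t \<in> W" using W s by (rule eventually_at_in_open')
  have key: "v t - v s = - (v t * (u t - u s) * v s)" if "t \<in> W" for t
  proof -
    have "v t * (u t - u s) * v s = (v t * u t) * v s - v t * (u s * v s)" by (simp add: algebra_simps)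
    also have "\<dots> = v s - v t" using inv[OF that] inv[OF s] by simp
    finally show ?thesis by simp
  qed
  define c where "c = norm (v s)"
  have ev1: "\<forall>\<^sub>F t in at s. norm (u t - u s) * c \<le> 1/2"
  proof (cases "c = 0")
    case True then show ?thesis by simp
  next
    case False
    then have cp: "c > 0" unfolding c_def by simp
    have "((\<lambda>t. u t - u s) \<longlongrightarrow> 0) (at s)" using uc by (simp add: LIM_zero)
    then have "\<forall>\<^sub>F t in at s. norm (u t - u s) < 1 / (2 * c)" using cp
      by (simp add: tendsto_iff dist_norm)
    then show ?thesis by eventually_elim (use cp in \<open>simp add: field_simps\<close>)
  qed
  have bound: "\<forall>\<^sub>F t in at s. norm (v t - v s) \<le> 2 * c * c * norm (u t - u s)"
    using ev1 evW
  proof eventually_elim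
    case (elim t)
    have k: "v t - v s = - (v t * (u t - u s) * v s)" using key elim(2) .
    have n1: "norm (v t - v s) \<le> norm (v t) * norm (u t - u s) * c"
    proof -
      have "norm (v t - v s) = norm (v t * (u t - u s) * v s)" unfolding k by (rule norm_minus_cancel)
      also have "\<dots> \<le> norm (v t * (u t - u s)) * norm (v s)" by (rule norm_mult_ineq)
      also have "\<dots> \<le> norm (v t) * norm (u t - u s) * norm (v s)"
        by (intro mult_right_mono norm_mult_ineq norm_ge_zero)
      finally show ?thesis unfolding c_def .
    qed
    have "norm (v t) \<le> norm (v s) + norm (v t - v s)" by (metis norm_triangle_sub add.commute)
    also have "\<dots> \<le> c + norm (v t) * (norm (u t - u s) * c)" using n1 unfolding c_def by (simp add: mult.assoc)
    also have "\<dots> \<le> c + norm (v t) * (1/2)" using elim(1) by (intro add_left_mono mult_left_mono) auto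
    finally have vt: "norm (v t) \<le> 2 * c" by simp
    have c0: "c \<ge> 0" unfolding c_def by simp
    have "norm (v t) * norm (u t - u s) * c \<le> (2 * c) * norm (u t - u s) * c"
      using vt c0 by (intro mult_right_mono) auto
    then have "norm (v t - v s) \<le> (2 * c) * norm (u t - u s) * c" using n1 by linarith
    then show ?case by (simp add: algebra_simps)
  qed
  have "((\<lambda>t. v t - v s) \<longlongrightarrow> 0) (at s)"
  proof (rule Lim_null_comparison[OF bound])
    have "((\<lambda>t. 2 * c * c * norm (u t - u s)) \<longlongrightarrow> 2 * c * c * norm (u s - u s)) (at s)"
      by (intro tendsto_intros uc)
    then show "((\<lambda>t. 2 * c * c * norm (u t - u s)) \<longlongrightarrow> 0) (at s)" by simp
  qed
  then have vc: "(v \<longlongrightarrow> v s) (at s)" by (rule LIM_zero_cancel)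
  have "((\<lambda>t. - (v t * scaleC (1 / (t - s)) (u t - u s) * v s)) \<longlongrightarrow> - (v s * Lu * v s)) (at s)"
    by (intro tendsto_minus tendsto_mult vc Lu tendsto_const)
  moreover have "\<forall>\<^sub>F t in at s. - (v t * scaleC (1 / (t - s)) (u t - u s) * v s) = scaleC (1 / (t - s)) (v t - v s)"
    using evW
  proof eventually_elim
    case (elim t)
    have "scaleC (1 / (t - s)) (v t * (u t - u s) * v s) = scaleC (1 / (t - s)) (v t * (u t - u s)) * v s"
      by (rule scaleC_mult_left)
    also have "scaleC (1 / (t - s)) (v t * (u t - u s)) = v t * scaleC (1 / (t - s)) (u t - u s)"
      by (rule scaleC_mult_right)
    finally show ?case unfolding key[OF elim] by (simp add: scaleC_minus_right)
  qed
  ultimately have "((\<lambda>t. scaleC (1 / (t - s)) (v t - v s)) \<longlongrightarrow> - (v s * Lu * v s)) (at s)"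
    by (rule Lim_transform_eventually)
  then show "\<exists>L. ((\<lambda>t. scaleC (1 / (t - s)) (v t - v s)) \<longlongrightarrow> L) (at s)" by blast
qed

lemma sdiff_weak:
  assumes u: "sdiff u W" and W: "open W" and \<phi>: "\<phi> \<in> lc_dual {norm}"
  shows "(\<lambda>s. \<phi> (u s)) holomorphic_on W"
  unfolding holomorphic_on_def
proof
  fix s assume s: "s \<in> W"
  obtain L where L: "((\<lambda>t. scaleC (1 / (t - s)) (u t - u s)) \<longlongrightarrow> L) (at s)"
    using u s unfolding sdiff_def by blast
  have "((\<lambda>t. \<phi> (scaleC (1 / (t - s)) (u t - u s))) \<longlongrightarrow> \<phi> L) (at s)"
    using continuous_on_tendsto_compose[OF norm_dual_cont[OF \<phi>] L] by simp
  moreover have "\<phi> (scaleC (1 / (t - s)) (u t - u s)) = (\<phi> (u t) - \<phi> (u s)) / (t - s)" for t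
    using dual_scaleC[OF \<phi>] dual_diff[OF \<phi>] by simp
  ultimately have "((\<lambda>t. (\<phi> (u t) - \<phi> (u s)) / (t - s)) \<longlongrightarrow> \<phi> L) (at s)" by simp
  then have "((\<lambda>t. \<phi> (u t)) has_field_derivative \<phi> L) (at s)"
    by (simp add: has_field_derivative_iff)
  then show "(\<lambda>s. \<phi> (u s)) field_differentiable at s within W"
    using field_differentiable_at_within field_differentiable_def by blast
qed

lemma HG_norm_char:
  fixes f :: "'a::complex_vector \<Rightarrow> 'c::complex_banach_algebra_1"
  assumes op: "one_open \<Omega>"
  shows "f \<in> HG {norm} \<Omega> \<longleftrightarrow> (\<forall>a v. sdiff (\<lambda>l. f (a + scaleC l v)) (Lset \<Omega> a v))"
proof
  assume "f \<in> HG {norm} \<Omega>"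
  then have H: "\<forall>\<phi>\<in>lc_dual {norm}. \<forall>a v. (\<lambda>l. \<phi> (f (a + scaleC l v))) holomorphic_on Lset \<Omega> a v"
    using HG_char[OF op] by blast
  show "\<forall>a v. sdiff (\<lambda>l. f (a + scaleC l v)) (Lset \<Omega> a v)"
    unfolding sdiff_def
  proof (intro allI ballI)
    fix a v s assume sin: "s \<in> Lset \<Omega> a v"
    have w: "\<And>\<phi>. \<phi> \<in> lc_dual {norm} \<Longrightarrow> (\<lambda>l. \<phi> ((\<lambda>l. f (a + scaleC l v)) l)) holomorphic_on Lset \<Omega> a v"
      using H by simp
    show "\<exists>L. ((\<lambda>t. scaleC (1 / (t - s)) (f (a + scaleC t v) - f (a + scaleC s v))) \<longlongrightarrow> L) (at s)"
      using dunford[where u="\<lambda>l. f (a + scaleC l v)", OF one_open_Lset[OF op] w sin] by simp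
  qed
next
  assume S: "\<forall>a v. sdiff (\<lambda>l. f (a + scaleC l v)) (Lset \<Omega> a v)"
  show "f \<in> HG {norm} \<Omega>" unfolding HG_char[OF op]
    using sdiff_weak[OF S[rule_format] one_open_Lset[OF op]] by blast
qed



lemma HG_add:
  assumes "one_open \<Omega>" "F \<in> HG P \<Omega>" "G \<in> HG P \<Omega>"
  shows "(\<lambda>x. F x + G x) \<in> HG P \<Omega>"
  unfolding HG_char[OF assms(1)]
proof (intro ballI allI)
  fix \<phi> a v assume d: "\<phi> \<in> lc_dual P"
  have "(\<lambda>l. \<phi> (F (a + scaleC l v)) + \<phi> (G (a + scaleC l v))) holomorphic_on Lset \<Omega> a v"
    using assms d by (intro holomorphic_on_add) (auto simp: HG_char)
  then show "(\<lambda>l. \<phi> (F (a + scaleC l v) + G (a + scaleC l v))) holomorphic_on Lset \<Omega> a v"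
    using dual_add[OF d] by simp
qed

lemma HG_scale:
  assumes "one_open \<Omega>" "F \<in> HG P \<Omega>"
  shows "(\<lambda>x. scaleC c (F x)) \<in> HG P \<Omega>"
  unfolding HG_char[OF assms(1)]
proof (intro ballI allI)
  fix \<phi> a v assume d: "\<phi> \<in> lc_dual P"
  have "(\<lambda>l. c * \<phi> (F (a + scaleC l v))) holomorphic_on Lset \<Omega> a v"
    using assms d by (intro holomorphic_on_mult holomorphic_on_const) (auto simp: HG_char)
  then show "(\<lambda>l. \<phi> (scaleC c (F (a + scaleC l v)))) holomorphic_on Lset \<Omega> a v"
    using dual_scaleC[OF d] by simp
qed

lemma HG_const: "one_open \<Omega> \<Longrightarrow> (\<lambda>x. y) \<in> HG P \<Omega>"
  by (simp add: HG_char)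

lemma HG_mult:
  fixes F G :: "'a::complex_vector \<Rightarrow> 'c::complex_banach_algebra_1"
  assumes "one_open \<Omega>" "F \<in> HG {norm} \<Omega>" "G \<in> HG {norm} \<Omega>"
  shows "(\<lambda>x. F x * G x) \<in> HG {norm} \<Omega>"
  unfolding HG_norm_char[OF assms(1)]
proof (intro allI)
  fix a v
  have "sdiff (\<lambda>l. F (a + scaleC l v)) (Lset \<Omega> a v)" "sdiff (\<lambda>l. G (a + scaleC l v)) (Lset \<Omega> a v)"
    using assms(2,3) unfolding HG_norm_char[OF assms(1)] by blast+
  then show "sdiff (\<lambda>l. F (a + scaleC l v) * G (a + scaleC l v)) (Lset \<Omega> a v)"
    by (rule sdiff_mult)
qed

definition inv0 :: "'c::ring_1 \<Rightarrow> 'c" where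
  "inv0 y = (SOME z. y * z = 1 \<and> z * y = 1)"

lemma inv0: "y \<in> invertibles \<Longrightarrow> y * inv0 y = 1 \<and> inv0 y * y = 1"
  unfolding invertibles_def inv0_def by (rule someI_ex) simp

lemma partB:
  fixes \<Omega>0 \<Omega> C :: "'a::complex_vector set"
  assumes open0: "one_open \<Omega>0" and open1: "one_open \<Omega>"
    and C_sub: "C \<subseteq> \<Omega>0 \<inter> \<Omega>"
    and ue: "unique_ext_property {norm :: 'c::complex_banach_algebra_1 \<Rightarrow> real} \<Omega>0 \<Omega> C"
  shows "(\<forall>f\<in>HG {norm :: 'c \<Rightarrow> real} \<Omega>0. \<forall>g\<in>HG {norm :: 'c \<Rightarrow> real} \<Omega>0. \<forall>F G.
              is_ext {norm} \<Omega> C f F \<and> is_ext {norm} \<Omega> C g G \<longrightarrow>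
                 is_ext {norm} \<Omega> C (\<lambda>x. f x + g x) (\<lambda>x. F x + G x)
               \<and> (\<forall>c. is_ext {norm} \<Omega> C (\<lambda>x. scaleC c (f x)) (\<lambda>x. scaleC c (F x)))
               \<and> is_ext {norm} \<Omega> C (\<lambda>x. f x * g x) (\<lambda>x. F x * G x))
        \<and> is_ext {norm} \<Omega> C (\<lambda>x. 1::'c) (\<lambda>x. 1)
        \<and> (\<forall>f\<in>HG {norm :: 'c \<Rightarrow> real} \<Omega>0. \<forall>F. is_ext {norm} \<Omega> C f F \<and> f ` \<Omega>0 \<subseteq> invertibles \<longrightarrow>
              F ` \<Omega> \<subseteq> invertibles)"
proof -
  have B1: "is_ext {norm} \<Omega> C (\<lambda>x. f x + g x) (\<lambda>x. F x + G x)
               \<and> (\<forall>c. is_ext {norm} \<Omega> C (\<lambda>x. scaleC c (f x)) (\<lambda>x. scaleC c (F x)))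
               \<and> is_ext {norm} \<Omega> C (\<lambda>x. f x * g x) (\<lambda>x. F x * G x)"
    if "is_ext {norm} \<Omega> C f F" "is_ext {norm} \<Omega> C g G" for f g F G :: "'a \<Rightarrow> 'c"
    using that HG_add[OF open1] HG_scale[OF open1] HG_mult[OF open1] unfolding is_ext_def by auto
  have B2: "is_ext {norm} \<Omega> C (\<lambda>x. 1::'c) (\<lambda>x. 1)"
    unfolding is_ext_def using HG_const[OF open1] by simp
  have B3: "F ` \<Omega> \<subseteq> invertibles"
    if f: "f \<in> HG {norm} \<Omega>0" and F: "is_ext {norm} \<Omega> C f F" and fi: "f ` \<Omega>0 \<subseteq> invertibles" for f F :: "'a \<Rightarrow> 'c"
  proof -
    define g where "g x = inv0 (f x)" for x
    have g: "g \<in> HG {norm} \<Omega>0" unfolding HG_norm_char[OF open0]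
    proof (intro allI)
      fix a v
      have "sdiff (\<lambda>l. f (a + scaleC l v)) (Lset \<Omega>0 a v)" using f HG_norm_char[OF open0] by blast
      moreover have "f (a + scaleC t v) * g (a + scaleC t v) = 1 \<and> g (a + scaleC t v) * f (a + scaleC t v) = 1"
        if "t \<in> Lset \<Omega>0 a v" for t
        using that fi inv0 unfolding g_def Lset_def by blast
      ultimately show "sdiff (\<lambda>l. g (a + scaleC l v)) (Lset \<Omega>0 a v)"
        by (rule sdiff_inv[OF _ one_open_Lset[OF open0]])
    qed
    obtain G where G: "is_ext {norm} \<Omega> C g G" using ue g unfolding unique_ext_property_def by blast
    have one0: "(\<lambda>x. 1::'c) \<in> HG {norm} \<Omega>0" by (rule HG_const[OF open0])
    obtain E where Eu: "\<forall>E'. is_ext {norm} \<Omega> C (\<lambda>x. 1::'c) E' \<longrightarrow> (\<forall>x\<in>\<Omega>. E' x = E x)"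
      using ue one0 unfolding unique_ext_property_def by blast
    have fg: "f x * g x = 1" "g x * f x = 1" if "x \<in> C" for x
      using that C_sub fi inv0 unfolding g_def by blast+
    have e1: "is_ext {norm} \<Omega> C (\<lambda>x. 1::'c) (\<lambda>x. F x * G x)"
      using F G HG_mult[OF open1] fg unfolding is_ext_def by auto
    have e2: "is_ext {norm} \<Omega> C (\<lambda>x. 1::'c) (\<lambda>x. G x * F x)"
      using F G HG_mult[OF open1] fg unfolding is_ext_def by auto
    have e3: "is_ext {norm} \<Omega> C (\<lambda>x. 1::'c) (\<lambda>x. 1)" using B2 .
    show ?thesis
    proof
      fix w assume "w \<in> F ` \<Omega>"
      then obtain x where x: "x \<in> \<Omega>" "w = F x" by blast
      have "F x * G x = E x" using Eu e1 x(1) by blast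
      moreover have "G x * F x = E x" using Eu e2 x(1) by blast
      moreover have "1 = E x" using Eu e3 x(1) by blast
      ultimately have "F x * G x = 1" "G x * F x = 1" by simp_all
      then show "w \<in> invertibles" unfolding invertibles_def x(2) by blast
    qed
  qed
  show ?thesis
  proof (intro conjI)
    show "\<forall>f\<in>HG {norm :: 'c \<Rightarrow> real} \<Omega>0. \<forall>g\<in>HG {norm :: 'c \<Rightarrow> real} \<Omega>0. \<forall>F G.
              is_ext {norm} \<Omega> C f F \<and> is_ext {norm} \<Omega> C g G \<longrightarrow>
                 is_ext {norm} \<Omega> C (\<lambda>x. f x + g x) (\<lambda>x. F x + G x)
               \<and> (\<forall>c. is_ext {norm} \<Omega> C (\<lambda>x. scaleC c (f x)) (\<lambda>x. scaleC c (F x)))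
               \<and> is_ext {norm} \<Omega> C (\<lambda>x. f x * g x) (\<lambda>x. F x * G x)"
      by (intro ballI allI impI, elim conjE, rule B1)
    show "is_ext {norm} \<Omega> C (\<lambda>x. 1::'c) (\<lambda>x. 1)" by (rule B2)
    show "\<forall>f\<in>HG {norm :: 'c \<Rightarrow> real} \<Omega>0. \<forall>F. is_ext {norm} \<Omega> C f F \<and> f ` \<Omega>0 \<subseteq> invertibles \<longrightarrow>
              F ` \<Omega> \<subseteq> invertibles"
      by (intro ballI allI impI, elim conjE, rule B3)
  qed
qed

theorem mainTheorem8:
  fixes \<Omega>0 \<Omega> C :: "'a::complex_vector set"
  assumes dimX: "\<exists>u v::'a. \<forall>a b::complex. scaleC a u + scaleC b v = 0 \<longrightarrow> a = 0 \<and> b = 0"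
    and open0: "one_open \<Omega>0" and open1: "one_open \<Omega>"
    and C_sub: "C \<subseteq> \<Omega>0 \<inter> \<Omega>"
  shows
    "(\<forall>P :: ('b::complex_vector \<Rightarrow> real) set.
        sc_hausdorff_lcs P \<and> (UNIV :: 'b set) \<noteq> {0} \<and> unique_ext_property P \<Omega>0 \<Omega> C \<longrightarrow>
        (\<forall>h\<in>HG_scalar \<Omega>0. \<exists>H. is_ext_scalar \<Omega> C h H \<and>
              (\<forall>H'. is_ext_scalar \<Omega> C h H' \<longrightarrow> (\<forall>x\<in>\<Omega>. H' x = H x)))
        \<and> (\<forall>h\<in>HG_scalar \<Omega>0. \<forall>f\<in>HG P \<Omega>0. \<forall>H F. is_ext_scalar \<Omega> C h H \<and> is_ext P \<Omega> C f F \<longrightarrow>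
              is_ext P \<Omega> C (\<lambda>x. scaleC (h x) (f x)) (\<lambda>x. scaleC (H x) (F x)))
        \<and> (\<forall>h\<in>HG_scalar \<Omega>0. \<forall>H. is_ext_scalar \<Omega> C h H \<longrightarrow> H ` \<Omega> \<subseteq> h ` \<Omega>0)
        \<and> (\<forall>f\<in>HG P \<Omega>0. \<forall>F. is_ext P \<Omega> C f F \<longrightarrow> F ` \<Omega> \<subseteq> closed_convex_hull P (f ` \<Omega>0)))
     \<and>
     (\<forall>N :: ('c::complex_banach_algebra_1 \<Rightarrow> real) set. N = {norm} \<and> unique_ext_property N \<Omega>0 \<Omega> C \<longrightarrow>
        (\<forall>f\<in>HG N \<Omega>0. \<forall>g\<in>HG N \<Omega>0. \<forall>F G.
              is_ext N \<Omega> C f F \<and> is_ext N \<Omega> C g G \<longrightarrow>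
                 is_ext N \<Omega> C (\<lambda>x. f x + g x) (\<lambda>x. F x + G x)
               \<and> (\<forall>c. is_ext N \<Omega> C (\<lambda>x. scaleC c (f x)) (\<lambda>x. scaleC c (F x)))
               \<and> is_ext N \<Omega> C (\<lambda>x. f x * g x) (\<lambda>x. F x * G x))
        \<and> is_ext N \<Omega> C (\<lambda>x. 1::'c) (\<lambda>x. 1)
        \<and> (\<forall>f\<in>HG N \<Omega>0. \<forall>F. is_ext N \<Omega> C f F \<and> f ` \<Omega>0 \<subseteq> invertibles \<longrightarrow>
              F ` \<Omega> \<subseteq> invertibles))"
proof (rule conjI; intro allI impI)
  fix P :: "('b::complex_vector \<Rightarrow> real) set"
  assume A: "sc_hausdorff_lcs P \<and> (UNIV :: 'b set) \<noteq> {0} \<and> unique_ext_property P \<Omega>0 \<Omega> C"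
  have a1: "sc_hausdorff_lcs P" and a2: "(UNIV :: 'b set) \<noteq> {0}" and a3: "unique_ext_property P \<Omega>0 \<Omega> C"
    using A by auto
  show "(\<forall>h\<in>HG_scalar \<Omega>0. \<exists>H. is_ext_scalar \<Omega> C h H \<and>
              (\<forall>H'. is_ext_scalar \<Omega> C h H' \<longrightarrow> (\<forall>x\<in>\<Omega>. H' x = H x)))
        \<and> (\<forall>h\<in>HG_scalar \<Omega>0. \<forall>f\<in>HG P \<Omega>0. \<forall>H F. is_ext_scalar \<Omega> C h H \<and> is_ext P \<Omega> C f F \<longrightarrow>
              is_ext P \<Omega> C (\<lambda>x. scaleC (h x) (f x)) (\<lambda>x. scaleC (H x) (F x)))
        \<and> (\<forall>h\<in>HG_scalar \<Omega>0. \<forall>H. is_ext_scalar \<Omega> C h H \<longrightarrow> H ` \<Omega> \<subseteq> h ` \<Omega>0)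
        \<and> (\<forall>f\<in>HG P \<Omega>0. \<forall>F. is_ext P \<Omega> C f F \<longrightarrow> F ` \<Omega> \<subseteq> closed_convex_hull P (f ` \<Omega>0))"
    by (rule partA[OF open0 open1 C_sub a1 a2 a3])
next
  fix N :: "('c::complex_banach_algebra_1 \<Rightarrow> real) set"
  assume N: "N = {norm} \<and> unique_ext_property N \<Omega>0 \<Omega> C"
  then have Nn: "N = {norm}" and ue: "unique_ext_property {norm :: 'c \<Rightarrow> real} \<Omega>0 \<Omega> C" by auto
  show "(\<forall>f\<in>HG N \<Omega>0. \<forall>g\<in>HG N \<Omega>0. \<forall>F G.
              is_ext N \<Omega> C f F \<and> is_ext N \<Omega> C g G \<longrightarrow>
                 is_ext N \<Omega> C (\<lambda>x. f x + g x) (\<lambda>x. F x + G x)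
               \<and> (\<forall>c. is_ext N \<Omega> C (\<lambda>x. scaleC c (f x)) (\<lambda>x. scaleC c (F x)))
               \<and> is_ext N \<Omega> C (\<lambda>x. f x * g x) (\<lambda>x. F x * G x))
        \<and> is_ext N \<Omega> C (\<lambda>x. 1::'c) (\<lambda>x. 1)
        \<and> (\<forall>f\<in>HG N \<Omega>0. \<forall>F. is_ext N \<Omega> C f F \<and> f ` \<Omega>0 \<subseteq> invertibles \<longrightarrow>
              F ` \<Omega> \<subseteq> invertibles)"
    unfolding Nn by (rule partB[OF open0 open1 C_sub ue])
qed


end
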